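(* For every generator $A=(a_0;a_1,\dots,a_n;a_{n+1})$ of $\mathcal C_S$, the element $$T(A)=\sum_{(A_1,\dots,A_k)\ \text{cut of }A}[A_1|\cdots|A_k]\in B(\mathcal C_S)^0$$ (sum over all $k$-cuts for all $k\ge1$) satisfies $d\,T(A)=0$ in the bar construction $B(\mathcal C_S)$. Hence $T(A)$ defines an element of $H^0B(\mathcal C_S)(n)$.
   Context: $\mathcal C_S$ ($S$ a set) is the graded-commutative unital $\mathbb Q$-algebra freely generated by symbols $(a_0;a_1,\dots,a_n;a_{n+1})$, $n\ge1$, $a_i\in S$, each of cohomological degree 1 and Adams degree $n$. A 2-cut of $A=(a_0;a_1,\dots,a_n;a_{n+1})$ is, for $0\le i<j\le n$ with $(i,j)\ne(0,n)$, the ordered pair $(A',A'')$, $A'=(a_0;a_1,\dots,a_i,a_{j+1},\dots,a_n;a_{n+1})$, $A''=(a_i;a_{i+1},\dots,a_j;a_{j+1})$. The 1-cut of $A$ is $(A)$; for $k\ge2$ a $k$-cut is an ordered $k$-tuple obtained from a $(k-1)$-cut $(A_1,\dots,A_{k-1})$ by replacing one entry $A_l$ by the two consecutive entries $A_l',A_l''$ where $(A_l',A_l'')$ is a 2-cut of $A_l$. Cuts are recorded in terms of index positions (pieces are subsequences of positions $0,\dots,n+1$ of $A$), and "all cuts" means all $k$-cuts for all $k\ge1$. The differential on $\mathcal C_S$ is the derivation with $dA=-\sum_{\text{2-cuts}}A'A''$; $\mathcal C_S$ is augmented by sending all generators to $0$. Bar construction: for an augmented commutative DGA $\mathcal A$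 with augmentation ideal $\mathcal A^+$, $B(\mathcal A)=T(\mathcal A^+[1])$ with elements written $[x_1|\cdots|x_r]$ of degree $\sum(\deg x_i-1)$; with $J(x)=(-1)^{\deg x-1}x$, the differential is $d=d_{ext}+d_{int}$, $d_{ext}[x_1|\cdots|x_r]=\sum_{i}[Jx_1|\cdots|Jx_{i-1}|dx_i|x_{i+1}|\cdots|x_r]$, $d_{int}[x_1|\cdots|x_r]=\sum_{i=1}^{r-1}[Jx_1|\cdots|Jx_{i-1}|Jx_i\cdot x_{i+1}|x_{i+2}|\cdots|x_r]$. $H^0B(\mathcal A)(n)$ denotes the degree-0 cohomology in Adams degree $n$. *)

theory Defs
  imports Complex_Main "HOL-Library.Function_Algebras"
begin

text \<open>
  A generator (a_0; a_1,...,a_n; a_{n+1}) of C_S (n >= 1) is the list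
  [a_0,...,a_{n+1}] of length n+2 >= 3.  Since all generators have odd degree 1,
  the free graded-commutative Q-algebra C_S is the exterior algebra on the
  generators; a monomial is a word (list) of generators, the empty word being 1.
  A basis tensor [x_1|...|x_r] of B(C_S) with x_i monomials of the augmentation
  ideal is a list of nonempty words.  Elements of B(C_S) are represented by
  finitely supported formal Q-combinations of such lists of words (functions
  from lists of words to rat).  Two formal combinations represent the same
  element iff their difference is killed by all "alternated coefficient"
  functionals (graded-commutativity / exterior relations in each tensor slot).
\<close>

type_synonym 's gen = "'s list"
type_synonym 's word = "'s gen list"
type_synonym 's barb = "'s word list"
type_synonym 's fsum = "'s barb \<Rightarrow> rat"

definition single :: "'s barb \<Rightarrow> 's fsum" where
  "single b = (\<lambda>y. if y = b then 1 else 0)"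

definition smult :: "rat \<Rightarrow> 's fsum \<Rightarrow> 's fsum" where
  "smult c F = (\<lambda>y. c * F y)"

text \<open>2-cuts of a piece given by its list p of index positions
  (p = [p_0,...,p_{n+1}]): for 0 <= i < j <= n, (i,j) \<noteq> (0,n),
  A' = positions p_0..p_i, p_{j+1}..p_{n+1} and A'' = positions p_i..p_{j+1}.\<close>
definition cut2 :: "nat list \<Rightarrow> (nat list \<times> nat list) set" where
  "cut2 p = {(take (i+1) p @ drop (j+1) p, take (j+2-i) (drop i p)) | i j.
              i < j \<and> j \<le> length p - 2 \<and> (i, j) \<noteq> (0, length p - 2)}"

inductive_set cuts :: "nat list \<Rightarrow> nat list list set" for p where
  base: "[p] \<in> cuts p"
| step: "cs \<in> cuts p \<Longrightarrow> l < length cs \<Longrightarrow> (q1, q2) \<in> cut2 (cs ! l) \<Longrightarrow>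
          take l cs @ [q1, q2] @ drop (Suc l) cs \<in> cuts p"

definition Tcut :: "'s gen \<Rightarrow> 's fsum" where
  "Tcut A = (\<Sum>cs\<in>cuts [0..<length A]. single (map (\<lambda>q. [map (\<lambda>k. A ! k) q]) cs))"

text \<open>Sign of J x_1 ... J x_{i-1}: product of (-1)^(deg x_l - 1), l < i.\<close>
definition jsign :: "'s barb \<Rightarrow> nat \<Rightarrow> rat" where
  "jsign ws i = (\<Prod>l<i. (-1) ^ (length (ws ! l) - 1))"

text \<open>External differential on a basis tensor.  On C_S, d is the derivation with
  d A = - sum over 2-cuts A' A''; on a monomial g_0...g_{m-1},
  d = sum_j (-1)^j g_0 ... (d g_j) ... g_{m-1}.\<close>
definition dext :: "'s barb \<Rightarrow> 's fsum" where
  "dext ws = (\<Sum>i<length ws. \<Sum>j<length (ws ! i).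
      \<Sum>(p1, p2)\<in>cut2 [0..<length (ws ! i ! j)].
        smult (jsign ws i * (-1) * (-1) ^ j)
          (single (ws[i := take j (ws ! i)
                    @ [map (\<lambda>k. ws ! i ! j ! k) p1, map (\<lambda>k. ws ! i ! j ! k) p2]
                    @ drop (Suc j) (ws ! i)])))"

text \<open>Internal differential: [Jx_1|...|Jx_{i-1}|Jx_i . x_{i+1}|...].\<close>
definition dint :: "'s barb \<Rightarrow> 's fsum" where
  "dint ws = (\<Sum>i<length ws - 1.
      smult (jsign ws (Suc i))
        (single (take i ws @ [ws ! i @ ws ! Suc i] @ drop (Suc (Suc i)) ws)))"

definition dbasis :: "'s barb \<Rightarrow> 's fsum" where
  "dbasis ws = dext ws + dint ws"

definition dB :: "'s fsum \<Rightarrow> 's fsum" where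
  "dB F = (\<Sum>b\<in>{b. F b \<noteq> 0}. smult (F b) (dbasis b))"

text \<open>Sign relating two words of generators in the exterior algebra:
  u = \<plusminus> w as monomials; 0 if w has a repeated generator or u is not a
  rearrangement of w; otherwise the sign of the rearrangement (parity of
  the inversions).\<close>
definition permsign :: "'s word \<Rightarrow> 's word \<Rightarrow> rat" where
  "permsign u w = (if distinct u \<and> distinct w \<and> set u = set w
     then (-1) ^ card {(k, l). k < l \<and> l < length u \<and>
              (\<exists>a b. b < a \<and> a < length w \<and> u ! k = w ! a \<and> u ! l = w ! b)}
     else 0)"

definition slotsign :: "'s barb \<Rightarrow> 's barb \<Rightarrow> rat" where
  "slotsign vs ws = (if length vs = length ws
     then (\<Prod>i<length ws. permsign (vs ! i) (ws ! i)) else 0)"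

definition bar_zero :: "'s fsum \<Rightarrow> bool" where
  "bar_zero F = (\<forall>ws. (\<Sum>b\<in>{b. F b \<noteq> 0}. F b * slotsign b ws) = 0)"

end

theory Submission
  imports Defs
begin

definition lo :: "nat list \<Rightarrow> nat" where "lo X = Min (set X)"
definition hi :: "nat list \<Rightarrow> nat" where "hi X = Max (set X)"
definition wfp :: "nat \<Rightarrow> nat list \<Rightarrow> bool" where
  "wfp N X \<longleftrightarrow> sorted_wrt (<) X \<and> 3 \<le> length X \<and> set X \<subseteq> {..<N}"
definition edge :: "nat list \<Rightarrow> nat \<Rightarrow> nat \<Rightarrow> bool" where
  "edge X a b \<longleftrightarrow> a \<in> set X \<and> b \<in> set X \<and> a < b \<and> (\<forall>x\<in>set X. x \<le> a \<or> b \<le> x)"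

lemma wfp_basic:
  assumes "wfp N X"
  shows "lo X \<in> set X" "hi X \<in> set X" "\<And>x. x \<in> set X \<Longrightarrow> lo X \<le> x \<and> x \<le> hi X"
    "lo X < hi X" "\<exists>x\<in>set X. lo X < x \<and> x < hi X" "card (set X) = length X"
    "sorted_wrt (<) X" "3 \<le> length X" "X \<noteq> []"
proof -
  have s: "sorted_wrt (<) X" and l: "3 \<le> length X" using assms by (auto simp: wfp_def)
  have d: "distinct X" using s by (simp add: strict_sorted_iff)
  have ne: "set X \<noteq> {}" using l by auto
  show c: "card (set X) = length X" using d by (simp add: distinct_card)
  show "lo X \<in> set X" "hi X \<in> set X" using ne by (auto simp: lo_def hi_def)
  show "\<And>x. x \<in> set X \<Longrightarrow> lo X \<le> x \<and> x \<le> hi X" by (auto simp: lo_def hi_def)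
  have "card (set X - {lo X, hi X}) \<ge> 1"
  proof -
    have "card (set X - {lo X, hi X}) \<ge> card (set X) - card {lo X, hi X}"
      by (rule diff_card_le_card_Diff) simp
    moreover have "card {lo X, hi X} \<le> 2" by (simp add: card_insert_le_m1)
    ultimately show ?thesis using c l by linarith
  qed
  then have "set X - {lo X, hi X} \<noteq> {}" by (metis card.empty not_one_le_zero)
  then obtain x where x: "x \<in> set X" "x \<noteq> lo X" "x \<noteq> hi X" by blast
  moreover have "lo X \<le> x" "x \<le> hi X" using x by (auto simp: lo_def hi_def)
  ultimately show "\<exists>x\<in>set X. lo X < x \<and> x < hi X"
    by (intro bexI[of _ x]) (auto simp: order.strict_iff_order)
  then show "lo X < hi X" by auto
  show "sorted_wrt (<) X" "3 \<le> length X" "X \<noteq> []" using s l by auto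
qed

lemma lo_hd: "sorted_wrt (<) X \<Longrightarrow> X \<noteq> [] \<Longrightarrow> lo X = hd X"
  unfolding lo_def by (cases X) (auto intro!: Min_eqI)

lemma hi_last: "sorted_wrt (<) X \<Longrightarrow> X \<noteq> [] \<Longrightarrow> hi X = last X"
  unfolding hi_def
proof (induction X rule: rev_induct)
  case (snoc x xs) thus ?case by (auto simp: sorted_wrt_append intro!: Max_eqI)
qed simp

lemma sorted_idx_less:
  fixes P :: "nat list"
  assumes "sorted_wrt (<) P" "a < length P" "b < length P"
  shows "P!a < P!b \<longleftrightarrow> a < b"
proof
  assume h: "P!a < P!b"
  show "a < b"
  proof (rule ccontr)
    assume "\<not> a < b"
    then consider "b < a" | "b = a" by linarith
    then show False
    proof cases
      case 1 then show ?thesis using sorted_wrt_nth_less[OF assms(1) 1 assms(2)] h by linarith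
    next
      case 2 then show ?thesis using h by simp
    qed
  qed
next
  assume "a < b" then show "P!a < P!b" using sorted_wrt_nth_less[OF assms(1) _ assms(3)] by simp
qed

lemma sorted_idx_le:
  "sorted_wrt (<) (P::nat list) \<Longrightarrow> a < length P \<Longrightarrow> b < length P \<Longrightarrow> P!a \<le> P!b \<longleftrightarrow> a \<le> b"
  using sorted_idx_less[of P b a] by linarith

lemma set_take_sorted:
  fixes P :: "nat list"
  assumes "sorted_wrt (<) P" "i < length P"
  shows "set (take (Suc i) P) = {x\<in>set P. x \<le> P!i}"
proof -
  have "x \<in> set (take (Suc i) P) \<longleftrightarrow> (\<exists>m<length P. m \<le> i \<and> x = P!m)" for x
    by (auto simp: in_set_conv_nth)
  moreover have "x \<in> set P \<and> x \<le> P!i \<longleftrightarrow> (\<exists>m<length P. m \<le> i \<and> x = P!m)" for x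
    using sorted_idx_le[OF assms(1) _ assms(2)] by (auto simp: in_set_conv_nth)
  ultimately show ?thesis by blast
qed

lemma set_drop_sorted:
  fixes P :: "nat list"
  assumes "sorted_wrt (<) P" "i < length P"
  shows "set (drop i P) = {x\<in>set P. P!i \<le> x}"
proof -
  have "x \<in> set (drop i P) \<longleftrightarrow> (\<exists>m<length P. i \<le> m \<and> x = P!m)" for x
    apply (auto simp: in_set_conv_nth)
    apply (rule_tac x="i+ia" in exI, simp)
    apply (rule_tac x="m-i" in exI, simp)
    done
  moreover have "x \<in> set P \<and> P!i \<le> x \<longleftrightarrow> (\<exists>m<length P. i \<le> m \<and> x = P!m)" for x
    using sorted_idx_le[OF assms(1) assms(2)] by (auto simp: in_set_conv_nth)
  ultimately show ?thesis by blast
qed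

lemma cut2_lists:
  fixes P :: "nat list"
  assumes s: "sorted_wrt (<) P" and ij: "i < j" "Suc j < length P"
  shows "take (Suc i) P @ drop (Suc j) P = filter (\<lambda>x. x \<le> P!i \<or> P!(Suc j) \<le> x) P"
    and "take (Suc (Suc j) - i) (drop i P) = filter (\<lambda>x. P!i \<le> x \<and> x \<le> P!(Suc j)) P"
proof -
  have lt: "P!i < P!(Suc j)" using sorted_idx_less[OF s] ij by simp
  have st: "set (take (Suc i) P) = {x\<in>set P. x \<le> P!i}"
    using set_take_sorted[OF s, of i] ij by simp
  have sd: "set (drop (Suc j) P) = {x\<in>set P. P!(Suc j) \<le> x}"
    using set_drop_sorted[OF s, of "Suc j"] ij by simp
  have a: "sorted_wrt (<) (take (Suc i) P @ drop (Suc j) P)"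
    unfolding sorted_wrt_append using s st sd lt by (auto intro: sorted_wrt_take sorted_wrt_drop)
  have b: "sorted_wrt (<) (filter (\<lambda>x. x \<le> P!i \<or> P!(Suc j) \<le> x) P)"
    using s by (rule sorted_wrt_filter)
  have c: "set (filter (\<lambda>x. x \<le> P!i \<or> P!(Suc j) \<le> x) P) = set (take (Suc i) P @ drop (Suc j) P)"
    using st sd by auto
  show "take (Suc i) P @ drop (Suc j) P = filter (\<lambda>x. x \<le> P!i \<or> P!(Suc j) \<le> x) P"
    using strict_sorted_equal[OF a b c] by simp
  have e: "take (Suc (Suc j) - i) (drop i P) = drop i (take (Suc (Suc j)) P)"
    using ij by (simp add: take_drop)
  let ?L = "take (Suc (Suc j)) P"
  have sL: "sorted_wrt (<) ?L" using s by (rule sorted_wrt_take)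
  have setL: "set ?L = {x\<in>set P. x \<le> P!(Suc j)}"
    using set_take_sorted[OF s, of "Suc j"] ij by simp
  have Li: "?L ! i = P ! i" using ij by simp
  have sdL: "set (drop i ?L) = {x\<in>set ?L. P!i \<le> x}"
    using set_drop_sorted[OF sL, of i] ij Li by simp
  show "take (Suc (Suc j) - i) (drop i P) = filter (\<lambda>x. P!i \<le> x \<and> x \<le> P!(Suc j)) P"
  proof -
    have a: "sorted_wrt (<) (drop i ?L)" using sL by (rule sorted_wrt_drop)
    have b: "sorted_wrt (<) (filter (\<lambda>x. P!i \<le> x \<and> x \<le> P!(Suc j)) P)"
      using s by (rule sorted_wrt_filter)
    have c: "set (filter (\<lambda>x. P!i \<le> x \<and> x \<le> P!(Suc j)) P) = set (drop i ?L)"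
      using sdL setL by auto
    show ?thesis unfolding e using strict_sorted_equal[OF a b c] by simp
  qed
qed

definition chord :: "nat list \<Rightarrow> nat \<Rightarrow> nat \<Rightarrow> nat list \<Rightarrow> nat list \<Rightarrow> bool" where
  "chord P u v q1 q2 \<longleftrightarrow> u \<in> set P \<and> v \<in> set P \<and> u < v \<and> (\<exists>x\<in>set P. u < x \<and> x < v)
     \<and> \<not> (u = lo P \<and> v = hi P)
     \<and> q1 = filter (\<lambda>x. x \<le> u \<or> v \<le> x) P \<and> q2 = filter (\<lambda>x. u \<le> x \<and> x \<le> v) P"

lemma cut2_char:
  fixes P :: "nat list"
  assumes s: "sorted_wrt (<) P"
  shows "(q1, q2) \<in> cut2 P \<longleftrightarrow> (\<exists>u v. chord P u v q1 q2)"
proof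
  assume "(q1, q2) \<in> cut2 P"
  then obtain i j where q: "q1 = take (i+1) P @ drop (j+1) P" "q2 = take (j+2-i) (drop i P)"
    and c: "i < j" "j \<le> length P - 2" "(i, j) \<noteq> (0, length P - 2)"
    unfolding cut2_def by blast
  have len: "Suc j < length P" using c by linarith
  have ne: "P \<noteq> []" using len by auto
  have q': "q1 = filter (\<lambda>x. x \<le> P!i \<or> P!(Suc j) \<le> x) P"
     "q2 = filter (\<lambda>x. P!i \<le> x \<and> x \<le> P!(Suc j)) P"
    using cut2_lists[OF s c(1) len] q by simp_all
  have "chord P (P!i) (P!(Suc j)) q1 q2"
    unfolding chord_def
  proof (intro conjI q')
    show "P!i \<in> set P" "P!(Suc j) \<in> set P" using len c by auto
    show "P!i < P!(Suc j)" using sorted_idx_less[OF s] len c by simp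
    show "\<exists>x\<in>set P. P!i < x \<and> x < P!(Suc j)"
      using sorted_idx_less[OF s, of i j] sorted_idx_less[OF s, of j "Suc j"] len c
      by (intro bexI[of _ "P!j"]) auto
    show "\<not> (P!i = lo P \<and> P!(Suc j) = hi P)"
    proof
      assume h: "P!i = lo P \<and> P!(Suc j) = hi P"
      have "lo P = P!0" using lo_hd[OF s ne] by (simp add: hd_conv_nth ne)
      moreover have "hi P = P!(length P - 1)" using hi_last[OF s ne] by (simp add: last_conv_nth ne)
      ultimately have "P!i = P!0" "P!(Suc j) = P!(length P - 1)" using h by auto
      moreover have "distinct P" using s by (simp add: strict_sorted_iff)
      ultimately have "i = 0" "Suc j = length P - 1"
        using nth_eq_iff_index_eq[of P i 0] nth_eq_iff_index_eq[of P "Suc j" "length P - 1"] len c ne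
        by auto
      then show False using c by auto
    qed
  qed
  then show "\<exists>u v. chord P u v q1 q2" by blast
next
  assume "\<exists>u v. chord P u v q1 q2"
  then obtain u v where ch: "chord P u v q1 q2" by blast
  then obtain i k where ik: "i < length P" "u = P!i" "k < length P" "v = P!k"
    unfolding chord_def by (auto simp: in_set_conv_nth)
  from ch obtain x where x: "x \<in> set P" "u < x" "x < v" unfolding chord_def by blast
  then obtain m where m: "m < length P" "x = P!m" by (auto simp: in_set_conv_nth)
  have im: "i < m" and mk: "m < k" using sorted_idx_less[OF s] ik m x by auto
  define j where "j = k - 1"
  have kj: "k = Suc j" using mk j_def by simp
  have ne: "P \<noteq> []" using ik by auto
  have ij: "i < j" using im mk kj by simp
  have len: "Suc j < length P" using ik kj by simp
  have q': "q1 = take (i+1) P @ drop (j+1) P" "q2 = take (j+2-i) (drop i P)"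
    using cut2_lists[OF s ij len] ch ik kj unfolding chord_def by simp_all
  have nb: "(i, j) \<noteq> (0, length P - 2)"
  proof
    assume "(i, j) = (0, length P - 2)"
    then have "i = 0" "k = length P - 1" using kj len by auto
    then have "u = lo P" "v = hi P"
      using lo_hd[OF s ne] hi_last[OF s ne] ik by (simp_all add: hd_conv_nth last_conv_nth ne)
    then show False using ch unfolding chord_def by blast
  qed
  show "(q1, q2) \<in> cut2 P"
    unfolding cut2_def using q' ij len nb by fastforce
qed

lemma lo_eqI: "finite (set X) \<Longrightarrow> a \<in> set X \<Longrightarrow> (\<And>x. x \<in> set X \<Longrightarrow> a \<le> x) \<Longrightarrow> lo X = a"
  unfolding lo_def by (rule Min_eqI) auto
lemma hi_eqI: "finite (set X) \<Longrightarrow> a \<in> set X \<Longrightarrow> (\<And>x. x \<in> set X \<Longrightarrow> x \<le> a) \<Longrightarrow> hi X = a"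
  unfolding hi_def by (rule Max_eqI) auto

lemma card3_le:
  assumes "finite S" "a \<in> S" "b \<in> S" "c \<in> S" "a < b" "b < (c::nat)"
  shows "3 \<le> card S"
proof -
  have "card {a, b, c} = 3" using assms by auto
  moreover have "card {a, b, c} \<le> card S" using assms by (intro card_mono) auto
  ultimately show ?thesis by simp
qed

lemma wfp_intro:
  assumes "sorted_wrt (<) X" "set X \<subseteq> {..<N}" "a \<in> set X" "b \<in> set X" "c \<in> set X" "a < b" "b < c"
  shows "wfp N X"
proof -
  have "card (set X) = length X" using assms(1) by (simp add: strict_sorted_iff distinct_card)
  moreover have "3 \<le> card (set X)" using assms by (intro card3_le[of _ a b c]) auto
  ultimately show ?thesis using assms unfolding wfp_def by simp
qed

lemma chord_props:
  assumes w: "wfp N P" and ch: "chord P u v q1 q2"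
  shows "set q1 = {x\<in>set P. x \<le> u \<or> v \<le> x}" "set q2 = {x\<in>set P. u \<le> x \<and> x \<le> v}"
    "lo P \<le> u" "v \<le> hi P" "u < v" "u \<in> set P" "v \<in> set P"
    "lo q1 = lo P" "hi q1 = hi P" "lo q2 = u" "hi q2 = v"
    "wfp N q1" "wfp N q2" "edge q1 u v" "set q1 \<union> set q2 = set P" "\<not> (u = lo P \<and> v = hi P)"
proof -
  note b = wfp_basic[OF w]
  have q: "q1 = filter (\<lambda>x. x \<le> u \<or> v \<le> x) P" "q2 = filter (\<lambda>x. u \<le> x \<and> x \<le> v) P"
    and uv: "u \<in> set P" "v \<in> set P" "u < v" and nb: "\<not> (u = lo P \<and> v = hi P)"
    using ch unfolding chord_def by auto
  from ch obtain x where x: "x \<in> set P" "u < x" "x < v" unfolding chord_def by blast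
  show s1: "set q1 = {x\<in>set P. x \<le> u \<or> v \<le> x}" "set q2 = {x\<in>set P. u \<le> x \<and> x \<le> v}"
    using q by auto
  show "lo P \<le> u" "v \<le> hi P" "u < v" "u \<in> set P" "v \<in> set P" "\<not> (u = lo P \<and> v = hi P)"
    using b(3) uv nb by auto
  show l1: "lo q1 = lo P" using s1 b(1,3) uv by (intro lo_eqI) auto
  show h1: "hi q1 = hi P" using s1 b(2,3) uv by (intro hi_eqI) auto
  show "lo q2 = u" using s1 uv by (intro lo_eqI) auto
  show "hi q2 = v" using s1 uv by (intro hi_eqI) auto
  have sq: "sorted_wrt (<) q1" "sorted_wrt (<) q2" using q b(7) by (auto intro: sorted_wrt_filter)
  have sub: "set q1 \<subseteq> {..<N}" "set q2 \<subseteq> {..<N}" using q w unfolding wfp_def by auto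
  show "wfp N q2" using sq(2) sub(2) s1(2) x uv by (intro wfp_intro[of _ _ u x v]) auto
  show "wfp N q1"
  proof (cases "u = lo P")
    case True
    then have "v < hi P" using nb b(3) uv by (metis order.order_iff_strict)
    then show ?thesis using sq(1) sub(1) s1(1) uv b(2) by (intro wfp_intro[of _ _ u v "hi P"]) auto
  next
    case False
    then have "lo P < u" using b(3) uv by (metis order.order_iff_strict)
    then show ?thesis using sq(1) sub(1) s1(1) uv b(1) by (intro wfp_intro[of _ _ "lo P" u v]) auto
  qed
  show "edge q1 u v" unfolding edge_def using s1 uv by auto
  show "set q1 \<union> set q2 = set P" using s1 by auto
qed

definition nest :: "nat list \<Rightarrow> nat list \<Rightarrow> bool" where
  "nest Y X \<longleftrightarrow> lo X \<le> lo Y \<and> hi Y \<le> hi X \<and> (lo Y \<noteq> lo X \<or> hi Y \<noteq> hi X)"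
definition inedge :: "nat list \<Rightarrow> nat list \<Rightarrow> bool" where
  "inedge Y X \<longleftrightarrow> (\<exists>a b. edge X a b \<and> a \<le> lo Y \<and> hi Y \<le> b)"
definition disj :: "nat list \<Rightarrow> nat list \<Rightarrow> bool" where
  "disj X Y \<longleftrightarrow> hi X \<le> lo Y \<or> hi Y \<le> lo X"
definition str :: "nat list \<Rightarrow> nat list \<Rightarrow> bool" where
  "str X Y \<longleftrightarrow> disj X Y \<or> inedge X Y \<or> inedge Y X"
definition ocr :: "nat list \<Rightarrow> nat list \<Rightarrow> bool" where
  "ocr X Y \<longleftrightarrow> \<not> nest X Y"

definition Good :: "nat \<Rightarrow> nat list list \<Rightarrow> bool" where
  "Good N c \<longleftrightarrow> c \<noteq> [] \<and> (\<forall>X\<in>set c. wfp N X) \<and> distinct c \<and> lo (hd c) = 0 \<and> hi (hd c) = N - 1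
    \<and> sorted_wrt ocr c \<and> (\<forall>X\<in>set c. \<forall>Y\<in>set c. X \<noteq> Y \<longrightarrow> str X Y)
    \<and> (\<forall>X\<in>set c. \<forall>a b. edge X a b \<and> Suc a < b \<longrightarrow> (\<exists>Z\<in>set c. lo Z = a \<and> hi Z = b))"

lemma str_sym: "str X Y \<longleftrightarrow> str Y X"
  unfolding str_def disj_def by auto

lemma edge_whole: "wfp N Y \<Longrightarrow> edge Y a b \<Longrightarrow> a \<le> lo Y \<Longrightarrow> hi Y \<le> b \<Longrightarrow> False"
  using wfp_basic(5)[of N Y] unfolding edge_def by force

lemma edge_mem: "edge X a b \<Longrightarrow> a \<in> set X \<and> b \<in> set X \<and> a < b"
  unfolding edge_def by auto

lemma span_distinct:
  assumes "wfp N X" "wfp N Y" "str X Y" "lo X = lo Y" "hi X = hi Y"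
  shows False
proof -
  note bx = wfp_basic[OF assms(1)] and bY = wfp_basic[OF assms(2)]
  consider "disj X Y" | "inedge X Y" | "inedge Y X" using assms(3) unfolding str_def by blast
  then show False
  proof cases
    case 1 then show ?thesis using bx(4) bY(4) assms unfolding disj_def by auto
  next
    case 2
    then obtain a b where "edge Y a b" "a \<le> lo X" "hi X \<le> b" unfolding inedge_def by blast
    then show ?thesis using edge_whole[OF assms(2)] assms by auto
  next
    case 3
    then obtain a b where "edge X a b" "a \<le> lo Y" "hi Y \<le> b" unfolding inedge_def by blast
    then show ?thesis using edge_whole[OF assms(1)] assms by auto
  qed
qed

lemma edge_class:
  assumes "edge Q a b" "u \<in> set Q" "v \<in> set Q" "u < v"
  shows "(u \<le> a \<and> b \<le> v) \<or> b \<le> u \<or> v \<le> a"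
  using assms unfolding edge_def by force

lemma chord_L3:
  assumes wz: "wfp N Z" and wq: "wfp N Q" and st: "str Z Q" and ch: "chord Q u v q1 q2"
    and h: "lo Z \<le> u" "v \<le> hi Z"
  shows "lo Z \<le> lo Q \<and> hi Q \<le> hi Z"
proof -
  note cp = chord_props[OF wq ch]
  from ch obtain x where x: "x \<in> set Q" "u < x" "x < v" unfolding chord_def by blast
  note bz = wfp_basic[OF wz]
  consider "disj Z Q" | "inedge Z Q" | "inedge Q Z" using st unfolding str_def by blast
  then show ?thesis
  proof cases
    case 1 then show ?thesis using cp h unfolding disj_def by auto
  next
    case 2
    then obtain a b where "edge Q a b" "a \<le> lo Z" "hi Z \<le> b" unfolding inedge_def by blast
    then show ?thesis using x h unfolding edge_def by force
  next
    case 3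
    then obtain a b where "edge Z a b" "a \<le> lo Q" "hi Q \<le> b" unfolding inedge_def by blast
    then show ?thesis using bz(3) unfolding edge_def by force
  qed
qed

lemma chord_L4:
  assumes wz: "wfp N Z" and wq: "wfp N Q" and st: "str Z Q" and ch: "chord Q u v q1 q2"
  shows "str Z q1 \<and> str Z q2"
proof -
  note cp = chord_props[OF wq ch]
  note bq = wfp_basic[OF wq]
  consider "disj Z Q" | "inedge Z Q" | "inedge Q Z" using st unfolding str_def by blast
  then show ?thesis
  proof cases
    case 1 then show ?thesis using cp(3,4,8,9,10,11) unfolding disj_def str_def by auto
  next
    case 3
    then obtain a b where e: "edge Z a b" "a \<le> lo Q" "hi Q \<le> b" unfolding inedge_def by blast
    have "inedge q1 Z" unfolding inedge_def using e cp(8,9) by (intro exI[of _ a] exI[of _ b]) auto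
    moreover have "inedge q2 Z" unfolding inedge_def using e cp(3,4,10,11)
      by (intro exI[of _ a] exI[of _ b]) auto
    ultimately show ?thesis unfolding str_def by blast
  next
    case 2
    then obtain a b where e: "edge Q a b" "a \<le> lo Z" "hi Z \<le> b" unfolding inedge_def by blast
    have ab: "a \<in> set Q" "b \<in> set Q" "a < b" using e(1) unfolding edge_def by auto
    consider "u \<le> a \<and> b \<le> v" | "b \<le> u" | "v \<le> a" using edge_class[OF e(1)] cp(5,6,7) by blast
    then show ?thesis
    proof cases
      case 1
      have "edge q2 a b" using e(1) 1 cp(2) ab unfolding edge_def by auto
      then have i2: "inedge Z q2" using e unfolding inedge_def by blast
      have "inedge Z q1" using cp(14) 1 e unfolding inedge_def by (intro exI[of _ u] exI[of _ v]) auto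
      then show ?thesis using i2 unfolding str_def by blast
    next
      case 2
      have "edge q1 a b" using e(1) 2 cp(1) ab unfolding edge_def by auto
      then have i1: "inedge Z q1" using e unfolding inedge_def by blast
      have "disj Z q2" using cp(10) 2 e unfolding disj_def by auto
      then show ?thesis using i1 unfolding str_def by blast
    next
      case 3
      have "edge q1 a b" using e(1) 3 cp(1) ab unfolding edge_def by auto
      then have i1: "inedge Z q1" using e unfolding inedge_def by blast
      have "disj Z q2" using cp(11) 3 e unfolding disj_def by auto
      then show ?thesis using i1 unfolding str_def by blast
    qed
  qed
qed

lemma chord_edges:
  assumes wq: "wfp N Q" and ch: "chord Q u v q1 q2"
  shows "edge q1 a b \<Longrightarrow> (a = u \<and> b = v) \<or> edge Q a b"
    and "edge q2 a b \<Longrightarrow> edge Q a b"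
proof -
  note cp = chord_props[OF wq ch]
  have s1: "set q1 = {x\<in>set Q. x \<le> u \<or> v \<le> x}" and s2: "set q2 = {x\<in>set Q. u \<le> x \<and> x \<le> v}"
    using cp(1,2) by auto
  show "edge Q a b" if e: "edge q2 a b"
  proof -
    have ab: "a \<in> set q2" "b \<in> set q2" "a < b" and bet: "\<forall>x\<in>set q2. x \<le> a \<or> b \<le> x"
      using e unfolding edge_def by auto
    have "u \<le> a" "b \<le> v" "a \<in> set Q" "b \<in> set Q" using ab s2 by auto
    moreover have "\<forall>x\<in>set Q. x \<le> a \<or> b \<le> x"
    proof
      fix x assume x: "x \<in> set Q"
      show "x \<le> a \<or> b \<le> x"
      proof (cases "u \<le> x \<and> x \<le> v")
        case True then have "x \<in> set q2" using s2 x by auto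
        then show ?thesis using bet by auto
      next
        case False then show ?thesis using \<open>u \<le> a\<close> \<open>b \<le> v\<close> by auto
      qed
    qed
    ultimately show ?thesis using ab(3) unfolding edge_def by auto
  qed
  assume e: "edge q1 a b"
  show "(a = u \<and> b = v) \<or> edge Q a b"
  proof (rule ccontr)
    assume nn: "\<not> ((a = u \<and> b = v) \<or> edge Q a b)"
    have ab: "a \<in> set q1" "b \<in> set q1" "a < b" and bet: "\<forall>x\<in>set q1. x \<le> a \<or> b \<le> x"
      using e unfolding edge_def by auto
    have abQ: "a \<in> set Q" "b \<in> set Q" using ab s1 by auto
    have "\<exists>x\<in>set Q. a < x \<and> x < b" using nn abQ ab(3) unfolding edge_def by (auto simp: not_le)
    then obtain x where x: "x \<in> set Q" "a < x" "x < b" by blast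
    have "x \<notin> set q1" using bet x by auto
    then have ux: "u < x" "x < v" using x s1 by auto
    have "a \<le> u \<or> v \<le> a" using ab(1) s1 by auto
    then have au: "a \<le> u" using x ux by auto
    have "b \<le> u \<or> v \<le> b" using ab(2) s1 by auto
    then have bv: "v \<le> b" using x ux by auto
    have "u \<in> set q1" "v \<in> set q1" using cp(5,6,7) s1 by auto
    then have "u \<le> a \<or> b \<le> u" "v \<le> a \<or> b \<le> v" using bet by auto
    then have "a = u" "b = v" using au bv ab(3) cp(5) by auto
    then show False using nn by blast
  qed
qed

lemma nest_span_cong: "lo X = lo X' \<Longrightarrow> hi X = hi X' \<Longrightarrow> lo Y = lo Y' \<Longrightarrow> hi Y = hi Y' \<Longrightarrow> nest X Y = nest X' Y'"
  unfolding nest_def by simp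

lemma Good_split:
  assumes G: "Good N (A @ Q # B)" and ch: "chord Q u v q1 q2"
  shows "Good N (A @ q1 # q2 # B)"
proof -
  let ?c = "A @ Q # B" and ?c' = "A @ q1 # q2 # B"
  have wf: "\<forall>X\<in>set ?c. wfp N X" and dist: "distinct ?c" and hd0: "lo (hd ?c) = 0" "hi (hd ?c) = N - 1"
    and oc: "sorted_wrt ocr ?c" and stc: "\<forall>X\<in>set ?c. \<forall>Y\<in>set ?c. X \<noteq> Y \<longrightarrow> str X Y"
    and cov: "\<forall>X\<in>set ?c. \<forall>a b. edge X a b \<and> Suc a < b \<longrightarrow> (\<exists>Z\<in>set ?c. lo Z = a \<and> hi Z = b)"
    using G unfolding Good_def by blast+
  have wq: "wfp N Q" using wf by simp
  note cp = chord_props[OF wq ch]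
  have QS: "Q \<notin> set A" "Q \<notin> set B" using dist by auto
  have wZ: "wfp N Z" if "Z \<in> set A \<union> set B" for Z using wf that by auto
  have sZ: "str Z Q" if "Z \<in> set A \<union> set B" for Z using stc that QS by auto
  have n1: "Z \<noteq> q1" if Z: "Z \<in> set A \<union> set B" for Z
  proof
    assume "Z = q1"
    then show False using span_distinct[OF wZ[OF Z] wq sZ[OF Z]] cp(8,9) by simp
  qed
  have n2: "Z \<noteq> q2" if Z: "Z \<in> set A \<union> set B" for Z
  proof
    assume e: "Z = q2"
    have "lo Z \<le> lo Q \<and> hi Q \<le> hi Z"
      using chord_L3[OF wZ[OF Z] wq sZ[OF Z] ch] e cp(10,11) by simp
    then show False using e cp(3,4,10,11,16) by simp
  qed
  have n3: "q1 \<noteq> q2" using cp(8,9,10,11,16) by auto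
  have setc': "set ?c' = set A \<union> set B \<union> {q1, q2}" by auto
  have spanpres: "\<exists>Z'\<in>set ?c'. lo Z' = lo Z \<and> hi Z' = hi Z" if "Z \<in> set ?c" for Z
  proof (cases "Z = Q")
    case True then show ?thesis using cp(8,9) by (intro bexI[of _ q1]) auto
  next
    case False then show ?thesis using that by (intro bexI[of _ Z]) auto
  qed
  have g1: "\<forall>X\<in>set ?c'. wfp N X" using wf cp(12,13) by auto
  have g2: "distinct ?c'" using dist n1 n2 n3 by auto
  have g3: "lo (hd ?c') = 0 \<and> hi (hd ?c') = N - 1"
    using hd0 cp(8,9) by (cases A) auto
  have ocA: "\<forall>Z\<in>set A. ocr Z Q" and ocB: "\<forall>Z\<in>set B. ocr Q Z"
    using oc by (auto simp: sorted_wrt_append)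
  have o1: "ocr Z q1" if "Z \<in> set A" for Z
    using ocA that nest_span_cong[of Z Z q1 Q] cp(8,9) unfolding ocr_def by auto
  have o2: "ocr q1 Z" if "Z \<in> set B" for Z
    using ocB that nest_span_cong[of q1 Q Z Z] cp(8,9) unfolding ocr_def by auto
  have o3: "ocr Z q2" if Z: "Z \<in> set A" for Z
  proof -
    have "\<not> nest Z Q" using ocA Z unfolding ocr_def by auto
    then show ?thesis using cp(3,4,10,11,16) unfolding ocr_def nest_def by auto
  qed
  have o4: "ocr q2 Z" if Z: "Z \<in> set B" for Z
  proof -
    have nq: "\<not> nest Q Z" using ocB Z unfolding ocr_def by auto
    have ZZ: "Z \<in> set A \<union> set B" using Z by auto
    show ?thesis unfolding ocr_def
    proof
      assume ne: "nest q2 Z"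
      then have "lo Z \<le> u" "v \<le> hi Z" using cp(10,11) unfolding nest_def by auto
      then have h: "lo Z \<le> lo Q \<and> hi Q \<le> hi Z" using chord_L3[OF wZ[OF ZZ] wq sZ[OF ZZ] ch] by simp
      show False
      proof (cases "lo Z = lo Q \<and> hi Z = hi Q")
        case True then show ?thesis using span_distinct[OF wZ[OF ZZ] wq sZ[OF ZZ]] by simp
      next
        case False then show ?thesis using h nq unfolding nest_def by auto
      qed
    qed
  qed
  have o5: "ocr q1 q2" using cp(3,4,8,9,10,11,16) unfolding ocr_def nest_def by auto
  have g4: "sorted_wrt ocr ?c'"
    using oc o1 o2 o3 o4 o5 by (auto simp: sorted_wrt_append)
  have s12: "str q1 q2"
  proof -
    have "inedge q2 q1" unfolding inedge_def using cp(14,10,11) by (intro exI[of _ u] exI[of _ v]) auto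
    then show ?thesis unfolding str_def by blast
  qed
  have g5: "\<forall>X\<in>set ?c'. \<forall>Y\<in>set ?c'. X \<noteq> Y \<longrightarrow> str X Y"
  proof (intro ballI impI)
    fix X Y assume X: "X \<in> set ?c'" and Y: "Y \<in> set ?c'" and XY: "X \<noteq> Y"
    have L: "str Z q1 \<and> str Z q2" if "Z \<in> set A \<union> set B" for Z
      using chord_L4[OF wZ[OF that] wq sZ[OF that] ch] .
    consider "X \<in> set A \<union> set B" "Y \<in> set A \<union> set B" | "X \<in> set A \<union> set B" "Y \<in> {q1, q2}"
      | "X \<in> {q1, q2}" "Y \<in> set A \<union> set B" | "X \<in> {q1, q2}" "Y \<in> {q1, q2}"
      using X Y setc' by blast
    then show "str X Y"
    proof cases
      case 1 then show ?thesis using stc XY by auto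
    next
      case 2 then show ?thesis using L by auto
    next
      case 3 then show ?thesis using L str_sym by auto
    next
      case 4 then show ?thesis using s12 str_sym XY by auto
    qed
  qed
  have g6: "\<forall>X\<in>set ?c'. \<forall>a b. edge X a b \<and> Suc a < b \<longrightarrow> (\<exists>Z\<in>set ?c'. lo Z = a \<and> hi Z = b)"
  proof (intro ballI allI impI)
    fix X a b assume X: "X \<in> set ?c'" and e: "edge X a b \<and> Suc a < b"
    have fromc0: "\<exists>Z\<in>set ?c'. lo Z = a \<and> hi Z = b" if Xc: "X' \<in> set ?c" and eX: "edge X' a b" for X'
    proof -
      have "\<exists>W\<in>set ?c. lo W = a \<and> hi W = b" using cov[rule_format, OF Xc] eX e by blast
      then obtain W where W: "W \<in> set ?c" "lo W = a" "hi W = b" by blast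
      obtain Z' where "Z' \<in> set ?c'" "lo Z' = lo W" "hi Z' = hi W" using spanpres[OF W(1)] by blast
      then show ?thesis using W by auto
    qed
    have fromc: "\<exists>Z\<in>set ?c'. lo Z = a \<and> hi Z = b" if "edge Q a b"
      using fromc0[of Q] that by simp
    consider "X \<in> set A \<union> set B" | "X = q1" | "X = q2" using X by auto
    then show "\<exists>Z\<in>set ?c'. lo Z = a \<and> hi Z = b"
    proof cases
      case 1
      then show ?thesis using fromc0[of X] e by auto
    next
      case 2
      then have "(a = u \<and> b = v) \<or> edge Q a b" using chord_edges(1)[OF wq ch] e by blast
      then show ?thesis
      proof
        assume "a = u \<and> b = v" then show ?thesis using cp(10,11) by (intro bexI[of _ q2]) auto
      qed (rule fromc)
    next
      case 3
      then show ?thesis using chord_edges(2)[OF wq ch] e fromc by blast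
    qed
  qed
  show ?thesis unfolding Good_def using g1 g2 g3 g4 g5 g6 by simp
qed

lemma Good_base:
  assumes "3 \<le> N" shows "Good N [[0..<N]]"
proof -
  have w: "wfp N [0..<N]" using assms unfolding wfp_def by (auto simp: sorted_wrt_upt)
  have "lo [0..<N] = 0" using assms by (intro lo_eqI) auto
  moreover have "hi [0..<N] = N - 1" using assms by (intro hi_eqI) auto
  moreover have "\<not> (edge [0..<N] a b \<and> Suc a < b)" for a b
  proof
    assume h: "edge [0..<N] a b \<and> Suc a < b"
    then have "b < N" unfolding edge_def by auto
    then have "Suc a \<in> set [0..<N]" using h by auto
    then show False using h unfolding edge_def by fastforce
  qed
  ultimately show ?thesis using w unfolding Good_def by auto
qed

lemma cuts_Good:
  assumes N: "3 \<le> N"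
  shows "c \<in> cuts [0..<N] \<Longrightarrow> Good N c"
proof (induction c rule: cuts.induct)
  case base then show ?case using Good_base[OF N] .
next
  case (step cs l q1 q2)
  have e: "cs = take l cs @ cs ! l # drop (Suc l) cs" using step.hyps(2) by (simp add: id_take_nth_drop)
  have "wfp N (cs ! l)" using step.IH step.hyps(2) unfolding Good_def by auto
  then obtain u v where ch: "chord (cs ! l) u v q1 q2"
    using cut2_char[of "cs ! l" q1 q2] step.hyps(3) unfolding wfp_def by blast
  have "Good N (take l cs @ cs ! l # drop (Suc l) cs)" using step.IH e by simp
  from Good_split[OF this ch] show ?case by simp
qed

lemma edges_disj:
  assumes "edge X e f" "edge X a b" "(e, f) \<noteq> (a, b)"
  shows "f \<le> a \<or> b \<le> e"
  using assms unfolding edge_def by (metis le_antisym not_le)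

lemma shared_edge:
  assumes wX: "wfp N X" and wZ: "wfp N Z" and st: "str Z X" and eX: "edge X a b" and eZ: "edge Z a b"
  shows False
proof -
  note bX = wfp_basic[OF wX] and bZ = wfp_basic[OF wZ]
  have ab: "a \<in> set X" "b \<in> set X" "a \<in> set Z" "b \<in> set Z" "a < b"
    using eX eZ unfolding edge_def by auto
  consider "disj Z X" | "inedge Z X" | "inedge X Z" using st unfolding str_def by blast
  then show False
  proof cases
    case 1 then show ?thesis using bX(3) bZ(3) ab unfolding disj_def by (meson le_trans not_le)
  next
    case 2
    then obtain g h where gh: "edge X g h" "g \<le> lo Z" "hi Z \<le> h" unfolding inedge_def by blast
    have "g \<le> a" "b \<le> h" using gh bZ(3) ab by (meson le_trans)+
    then have "g = a" "h = b" using gh(1) ab unfolding edge_def by (meson le_antisym le_trans not_le)+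
    then show False using edge_whole[OF wZ eZ] gh by simp
  next
    case 3
    then obtain g h where gh: "edge Z g h" "g \<le> lo X" "hi X \<le> h" unfolding inedge_def by blast
    have "g \<le> a" "b \<le> h" using gh bX(3) ab by (meson le_trans)+
    then have "g = a" "h = b" using gh(1) ab unfolding edge_def by (meson le_antisym le_trans not_le)+
    then show False using edge_whole[OF wX eX] gh by simp
  qed
qed

lemma Good_merge:
  assumes G: "Good N (A @ X # Y # B)" and ne: "nest Y X"
  shows "(X, Y) \<in> cut2 (sorted_list_of_set (set X \<union> set Y))
    \<and> Good N (A @ sorted_list_of_set (set X \<union> set Y) # B)"
proof -
  let ?c = "A @ X # Y # B"
  define M where "M = sorted_list_of_set (set X \<union> set Y)"
  let ?c' = "A @ M # B"
  have wf: "\<forall>X\<in>set ?c. wfp N X" and dist: "distinct ?c" and hd0: "lo (hd ?c) = 0" "hi (hd ?c) = N - 1"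
    and oc: "sorted_wrt ocr ?c" and stc: "\<forall>X\<in>set ?c. \<forall>Y\<in>set ?c. X \<noteq> Y \<longrightarrow> str X Y"
    and cov: "\<forall>X\<in>set ?c. \<forall>a b. edge X a b \<and> Suc a < b \<longrightarrow> (\<exists>Z\<in>set ?c. lo Z = a \<and> hi Z = b)"
    using G unfolding Good_def by blast+
  have wX: "wfp N X" and wY: "wfp N Y" using wf by auto
  note bX = wfp_basic[OF wX] and bY = wfp_basic[OF wY]
  have XY: "X \<noteq> Y" "X \<notin> set A" "X \<notin> set B" "Y \<notin> set A" "Y \<notin> set B" using dist by auto
  have sXY: "str Y X" using stc XY by auto
  have wZ: "wfp N Z" if "Z \<in> set A \<union> set B" for Z using wf that by auto
  have sZX: "str Z X" and sZY: "str Z Y" if "Z \<in> set A \<union> set B" for Z using stc that XY by auto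
  have neq: "lo X \<le> lo Y" "hi Y \<le> hi X" using ne unfolding nest_def by auto
  have ie: "inedge Y X"
  proof -
    consider "disj Y X" | "inedge Y X" | "inedge X Y" using sXY unfolding str_def by blast
    then show ?thesis
    proof cases
      case 1 then show ?thesis using neq bY(4) unfolding disj_def by auto
    next
      case 3
      then obtain a b where e: "edge Y a b" "a \<le> lo X" "hi X \<le> b" unfolding inedge_def by blast
      then have "a \<le> lo Y" "hi Y \<le> b" using neq by auto
      then show ?thesis using edge_whole[OF wY e(1)] by simp
    qed simp
  qed
  then obtain a b where eab: "edge X a b" "a \<le> lo Y" "hi Y \<le> b" unfolding inedge_def by blast
  have ab: "a \<in> set X" "b \<in> set X" "a < b" "\<forall>x\<in>set X. x \<le> a \<or> b \<le> x"
    using eab(1) unfolding edge_def by auto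
  have Sab: "Suc a < b"
  proof -
    obtain x where "x \<in> set Y" "lo Y < x" "x < hi Y" using bY(5) by blast
    then show ?thesis using eab by linarith
  qed
  obtain Z where Z: "Z \<in> set ?c" "lo Z = a" "hi Z = b"
    using cov[rule_format, of X a b] eab(1) Sab by auto
  have spanY: "lo Y = a \<and> hi Y = b"
  proof (rule ccontr)
    assume nsp: "\<not> (lo Y = a \<and> hi Y = b)"
    have ZY: "Z \<noteq> Y" using nsp Z by auto
    have ZX: "Z \<noteq> X" using edge_whole[OF wX eab(1)] Z by auto
    have ZAB: "Z \<in> set A \<union> set B" using Z ZX ZY by auto
    have "nest Y Z" using eab Z nsp unfolding nest_def by auto
    moreover have "nest Z X" using Z ab bX(3) span_distinct[OF wZ[OF ZAB] wX sZX[OF ZAB]]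
      unfolding nest_def by auto
    moreover have "\<forall>W\<in>set A. ocr W X" "\<forall>W\<in>set B. ocr Y W" using oc by (auto simp: sorted_wrt_append)
    ultimately show False using ZAB unfolding ocr_def by auto
  qed
  have Ysub: "\<forall>y\<in>set Y. a \<le> y \<and> y \<le> b" using bY(3) spanY by auto
  have abY: "a \<in> set Y" "b \<in> set Y" using bY(1,2) spanY by auto
  have fin: "finite (set X \<union> set Y)" by simp
  have sM: "sorted_wrt (<) M" and setM: "set M = set X \<union> set Y"
    unfolding M_def using fin by auto
  have loM: "lo M = lo X"
    using setM bX(1,3) Ysub ab by (intro lo_eqI) (auto, meson le_trans)
  have hiM: "hi M = hi X"
    using setM bX(2,3) Ysub ab by (intro hi_eqI) (auto, meson le_trans)
  have X_eq: "X = filter (\<lambda>x. x \<le> a \<or> b \<le> x) M"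
  proof -
    have "set (filter (\<lambda>x. x \<le> a \<or> b \<le> x) M) = set X"
      using setM ab Ysub abY by auto
    then show ?thesis using strict_sorted_equal[OF bX(7) sorted_wrt_filter[OF sM]] by simp
  qed
  have Y_eq: "Y = filter (\<lambda>x. a \<le> x \<and> x \<le> b) M"
  proof -
    have "set (filter (\<lambda>x. a \<le> x \<and> x \<le> b) M) = set Y"
      using setM ab Ysub abY by auto
    then show ?thesis using strict_sorted_equal[OF bY(7) sorted_wrt_filter[OF sM]] by simp
  qed
  have chM: "chord M a b X Y"
    unfolding chord_def
  proof (intro conjI X_eq Y_eq)
    show "a \<in> set M" "b \<in> set M" "a < b" using setM ab by auto
    obtain x where "x \<in> set Y" "lo Y < x" "x < hi Y" using bY(5) by blast
    then show "\<exists>x\<in>set M. a < x \<and> x < b" using setM spanY by auto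
    show "\<not> (a = lo M \<and> b = hi M)" using edge_whole[OF wX eab(1)] loM hiM by auto
  qed
  have cutM: "(X, Y) \<in> cut2 M" using cut2_char[OF sM] chM by blast
  have wM: "wfp N M"
  proof -
    obtain x where "x \<in> set X" "lo X < x" "x < hi X" using bX(5) by blast
    moreover have "set M \<subseteq> {..<N}" using setM wX wY unfolding wfp_def by auto
    ultimately show ?thesis using sM setM bX(1,2) by (intro wfp_intro[of _ _ "lo X" x "hi X"]) auto
  qed
  have MZ: "M \<noteq> Z" if Z: "Z \<in> set A \<union> set B" for Z
  proof
    assume "M = Z"
    then show False using span_distinct[OF wZ[OF Z] wX sZX[OF Z]] loM hiM by auto
  qed
  have g1: "\<forall>W\<in>set ?c'. wfp N W" using wf wM by auto
  have g2: "distinct ?c'" using dist MZ by auto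
  have g3: "lo (hd ?c') = 0 \<and> hi (hd ?c') = N - 1" using hd0 loM hiM by (cases A) auto
  have ocA: "\<forall>Z\<in>set A. ocr Z X" and ocB: "\<forall>Z\<in>set B. ocr X Z" and ocA': "sorted_wrt ocr A"
    and ocB': "sorted_wrt ocr B" and ocAB: "\<forall>Z\<in>set A. \<forall>W\<in>set B. ocr Z W"
    using oc by (auto simp: sorted_wrt_append)
  have g4: "sorted_wrt ocr ?c'"
    using ocA ocB ocA' ocB' ocAB nest_span_cong[of _ _ M X] nest_span_cong[of M X] loM hiM
    unfolding ocr_def by (auto simp: sorted_wrt_append)
  have strM: "str Z M" if Z: "Z \<in> set A \<union> set B" for Z
  proof -
    note bZ = wfp_basic[OF wZ[OF Z]]
    consider "disj Z X" | "inedge Z X" | "inedge X Z" using sZX[OF Z] unfolding str_def by blast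
    then show ?thesis
    proof cases
      case 1 then show ?thesis using loM hiM unfolding str_def disj_def by auto
    next
      case 3 then show ?thesis using loM hiM unfolding str_def inedge_def by auto
    next
      case 2
      then obtain e f where ef: "edge X e f" "e \<le> lo Z" "hi Z \<le> f" unfolding inedge_def by blast
      show ?thesis
      proof (cases "(e, f) = (a, b)")
        case False
        have d: "f \<le> a \<or> b \<le> e" using edges_disj[OF ef(1) eab(1) False] .
        have "edge M e f" using ef(1) setM Ysub d unfolding edge_def by auto
        then show ?thesis using ef unfolding str_def inedge_def by blast
      next
        case True
        then have Zab: "a \<le> lo Z" "hi Z \<le> b" using ef by auto
        consider "disj Z Y" | "inedge Z Y" | "inedge Y Z" using sZY[OF Z] unfolding str_def by blast
        then show ?thesis
        proof cases
          case 1 then show ?thesis using Zab spanY bZ(4) unfolding disj_def by auto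
        next
          case 3
          then obtain g h where gh: "edge Z g h" "g \<le> lo Y" "hi Y \<le> h" unfolding inedge_def by blast
          have "g \<in> set Z" "h \<in> set Z" using gh(1) unfolding edge_def by auto
          then have "lo Z \<le> g" "h \<le> hi Z" using bZ(3) by auto
          then show ?thesis using edge_whole[OF wZ[OF Z] gh(1)] gh spanY Zab by auto
        next
          case 2
          then obtain g h where gh: "edge Y g h" "g \<le> lo Z" "hi Z \<le> h" unfolding inedge_def by blast
          have ghY: "g \<in> set Y" "h \<in> set Y" "g < h" "\<forall>y\<in>set Y. y \<le> g \<or> h \<le> y"
            using gh(1) unfolding edge_def by auto
          have "edge M g h" unfolding edge_def
          proof (intro conjI ballI)
            show "g \<in> set M" "h \<in> set M" "g < h" using ghY setM by auto
            fix m assume m: "m \<in> set M"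
            show "m \<le> g \<or> h \<le> m"
            proof (cases "m \<in> set Y")
              case True then show ?thesis using ghY by auto
            next
              case False
              then have "m \<in> set X" using m setM by auto
              then have "m \<le> a \<or> b \<le> m" using ab by auto
              then show ?thesis using Ysub ghY by (meson le_trans)
            qed
          qed
          then show ?thesis using gh unfolding str_def inedge_def by blast
        qed
      qed
    qed
  qed
  have g5: "\<forall>U\<in>set ?c'. \<forall>W\<in>set ?c'. U \<noteq> W \<longrightarrow> str U W"
  proof (intro ballI impI)
    fix U W assume U: "U \<in> set ?c'" and W: "W \<in> set ?c'" and UW: "U \<noteq> W"
    consider "U \<in> set A \<union> set B" "W \<in> set A \<union> set B" | "U \<in> set A \<union> set B" "W = M"
      | "U = M" "W \<in> set A \<union> set B" | "U = M" "W = M" using U W by auto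
    then show "str U W"
    proof cases
      case 1 then show ?thesis using stc UW by auto
    next
      case 2 then show ?thesis using strM by auto
    next
      case 3 then show ?thesis using strM str_sym by auto
    next
      case 4 then show ?thesis using UW by auto
    qed
  qed
  have spanpres: "\<exists>Z'\<in>set ?c'. lo Z' = lo W \<and> hi Z' = hi W" if "W \<in> set ?c" "W \<noteq> Y" for W
  proof (cases "W = X")
    case True then show ?thesis using loM hiM by (intro bexI[of _ M]) auto
  next
    case False then show ?thesis using that by (intro bexI[of _ W]) auto
  qed
  have fromc: "\<exists>Z'\<in>set ?c'. lo Z' = e \<and> hi Z' = f"
    if U: "U \<in> set ?c" and eU: "edge U e f" and sef: "Suc e < f" and nY: "\<not> (e = a \<and> f = b)" for U e f
  proof -
    obtain W where W: "W \<in> set ?c" "lo W = e" "hi W = f" using cov[rule_format, OF U] eU sef by blast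
    have "W \<noteq> Y" using W spanY nY by auto
    then obtain Z' where "Z' \<in> set ?c'" "lo Z' = lo W" "hi Z' = hi W" using spanpres W(1) by blast
    then show ?thesis using W by auto
  qed
  have g6: "\<forall>U\<in>set ?c'. \<forall>e f. edge U e f \<and> Suc e < f \<longrightarrow> (\<exists>Z\<in>set ?c'. lo Z = e \<and> hi Z = f)"
  proof (intro ballI allI impI)
    fix U e f assume U: "U \<in> set ?c'" and ef: "edge U e f \<and> Suc e < f"
    show "\<exists>Z\<in>set ?c'. lo Z = e \<and> hi Z = f"
    proof (cases "U = M")
      case False
      then have UAB: "U \<in> set A \<union> set B" using U by auto
      have "\<not> (e = a \<and> f = b)"
      proof
        assume "e = a \<and> f = b"
        then show False using shared_edge[OF wX wZ[OF UAB] sZX[OF UAB] eab(1)] ef by auto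
      qed
      then show ?thesis using fromc[of U e f] UAB ef by auto
    next
      case True
      then have eM: "edge M e f" using ef by simp
      have efM: "e \<in> set M" "f \<in> set M" "e < f" "\<forall>m\<in>set M. m \<le> e \<or> f \<le> m"
        using eM unfolding edge_def by auto
      show ?thesis
      proof (cases "a \<le> e \<and> f \<le> b")
        case True
        have inY: "x \<in> set Y" if "x \<in> set M" "a \<le> x" "x \<le> b" for x
        proof (cases "x \<in> set X")
          case True
          then have "x \<le> a \<or> b \<le> x" using ab by auto
          then have "x = a \<or> x = b" using that by auto
          then show ?thesis using abY by auto
        qed (use that setM in auto)
        have "e \<in> set Y" "f \<in> set Y"
          using inY efM(1,2,3) True by auto
        then have "edge Y e f" using efM setM unfolding edge_def by auto
        moreover have "\<not> (e = a \<and> f = b)" using edge_whole[OF wY] calculation spanY by auto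
        ultimately show ?thesis using fromc[of Y e f] ef by auto
      next
        case False
        have eo: "e \<le> a \<or> b \<le> e"
        proof (rule ccontr)
          assume "\<not> (e \<le> a \<or> b \<le> e)"
          then have "a < e" "e < b" by auto
          moreover have "b \<in> set M" using setM ab by auto
          then have "b \<le> e \<or> f \<le> b" using efM(4) by blast
          ultimately have "f \<le> b" by auto
          then show False using False \<open>a < e\<close> by auto
        qed
        have fo: "f \<le> a \<or> b \<le> f"
        proof (rule ccontr)
          assume "\<not> (f \<le> a \<or> b \<le> f)"
          then have "a < f" "f < b" by auto
          moreover have "a \<in> set M" using setM ab by auto
          then have "a \<le> e \<or> f \<le> a" using efM(4) by blast
          ultimately have "a \<le> e" by auto
          then show False using False \<open>f < b\<close> by auto
        qed
        have inX: "x \<in> set X" if "x \<in> set M" "x \<le> a \<or> b \<le> x" for x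
        proof (cases "x \<in> set Y")
          case True
          then have "a \<le> x \<and> x \<le> b" using Ysub by auto
          then have "x = a \<or> x = b" using that by auto
          then show ?thesis using ab by auto
        qed (use that setM in auto)
        have "e \<in> set X" "f \<in> set X" using inX efM(1,2) eo fo by auto
        then have eX: "edge X e f" using efM setM unfolding edge_def by auto
        have "\<not> (e = a \<and> f = b)" using False by auto
        then show ?thesis using fromc[of X e f] eX ef by auto
      qed
    qed
  qed
  have "Good N ?c'" unfolding Good_def using g1 g2 g3 g4 g5 g6 by simp
  then show ?thesis using cutM unfolding M_def by simp
qed

lemma Good_root_nest:
  assumes G: "Good N (X # B)" and Y: "Y \<in> set B"
  shows "nest Y X"
proof -
  have wX: "wfp N X" and wY: "wfp N Y" and d: "X \<noteq> Y" and st: "str Y X"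
    and r: "lo X = 0" "hi X = N - 1"
    using G Y unfolding Good_def by auto
  have "hi Y < N" using wfp_basic(2)[OF wY] wY unfolding wfp_def by auto
  then have "hi Y \<le> hi X" using r by simp
  then show ?thesis using span_distinct[OF wY wX st] r unfolding nest_def by auto
qed

lemma Good_swap:
  assumes G: "Good N (A @ X # Y # B)" and nn: "\<not> nest Y X"
  shows "Good N (A @ Y # X # B)"
proof -
  have A: "A \<noteq> []"
  proof
    assume "A = []"
    then have "nest Y X" using Good_root_nest[of N X "Y # B" Y] G by simp
    then show False using nn by simp
  qed
  have st: "set (A @ Y # X # B) = set (A @ X # Y # B)" by auto
  have oc: "sorted_wrt ocr (A @ X # Y # B)" using G unfolding Good_def by blast
  then have "sorted_wrt ocr (A @ Y # X # B)" using nn unfolding ocr_def by (auto simp: sorted_wrt_append)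
  then show ?thesis using G A unfolding Good_def st by auto
qed

lemma Good_single:
  assumes G: "Good N [X]" shows "X = [0..<N]"
proof -
  have wX: "wfp N X" and r: "lo X = 0" "hi X = N - 1"
    and cov: "\<forall>a b. edge X a b \<and> Suc a < b \<longrightarrow> lo X = a \<and> hi X = b"
    using G unfolding Good_def by auto
  note bX = wfp_basic[OF wX]
  have ed: "b = Suc a" if "edge X a b" for a b
  proof (rule ccontr)
    assume "b \<noteq> Suc a"
    then have "Suc a < b" using that unfolding edge_def by auto
    then show False using cov edge_whole[OF wX that] that by auto
  qed
  have "k \<in> set X" if "k < N" for k
    using that
  proof (induction k)
    case 0 then show ?case using bX(1) r by simp
  next
    case (Suc k)
    then have kX: "k \<in> set X" by simp
    let ?T = "{x\<in>set X. k < x}"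
    have "hi X \<in> ?T" using bX(2) r Suc.prems by auto
    then have Tne: "?T \<noteq> {}" and Tfin: "finite ?T" by auto
    define f where "f = Min ?T"
    have fT: "f \<in> ?T" unfolding f_def using Min_in[OF Tfin Tne] .
    have fmin: "\<forall>x\<in>?T. f \<le> x" unfolding f_def using Tfin by auto
    have "edge X k f" unfolding edge_def using kX fT fmin by force
    then have "f = Suc k" by (rule ed)
    then show ?case using fT by simp
  qed
  then have "set X = {0..<N}" using wX unfolding wfp_def by auto
  then show ?thesis using strict_sorted_equal[OF bX(7), of "[0..<N]"] by (simp add: sorted_wrt_upt)
qed

lemma Good_cuts:
  "Good N c \<Longrightarrow> c \<in> cuts [0..<N]"
proof (induction "length c" arbitrary: c rule: less_induct)
  case less
  have ne: "c \<noteq> []" using less.prems unfolding Good_def by simp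
  then obtain X B where c: "c = X # B" by (cases c) auto
  show ?case
  proof (cases B)
    case Nil
    then have "X = [0..<N]" using Good_single less.prems c by simp
    then show ?thesis using c Nil cuts.base by simp
  next
    case (Cons Y B')
    have G: "Good N ([] @ X # Y # B')" using less.prems c Cons by simp
    have "nest Y X" using Good_root_nest[of N X "Y # B'" Y] G by simp
    from Good_merge[OF G this]
    have cM: "(X, Y) \<in> cut2 (sorted_list_of_set (set X \<union> set Y))"
      and GM: "Good N (sorted_list_of_set (set X \<union> set Y) # B')" by auto
    have "sorted_list_of_set (set X \<union> set Y) # B' \<in> cuts [0..<N]"
      using less.hyps[OF _ GM] c Cons by simp
    from cuts.step[OF this, of 0 X Y] cM show ?thesis using c Cons by simp
  qed
qed

definition stepc :: "nat list list \<Rightarrow> nat \<Rightarrow> nat list \<Rightarrow> nat list \<Rightarrow> nat list list" where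
  "stepc c i q1 q2 = take i c @ [q1, q2] @ drop (Suc i) c"
definition swapc :: "nat list list \<Rightarrow> nat \<Rightarrow> nat list list" where
  "swapc c i = take i c @ [c ! Suc i, c ! i] @ drop (Suc (Suc i)) c"

lemma decomp2: "Suc i < length c \<Longrightarrow> c = take i c @ c ! i # c ! Suc i # drop (Suc (Suc i)) c"
  by (metis Cons_nth_drop_Suc Suc_lessD append_take_drop_id)

lemma stepc_facts:
  assumes "i < length c"
  shows "length (stepc c i q1 q2) = Suc (length c)" "stepc c i q1 q2 ! i = q1" "stepc c i q1 q2 ! Suc i = q2"
    "take i (stepc c i q1 q2) = take i c" "drop (Suc (Suc i)) (stepc c i q1 q2) = drop (Suc i) c"
  using assms unfolding stepc_def by (auto simp: nth_append min_def)

lemma swapc_facts: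
  assumes "Suc i < length c"
  shows "length (swapc c i) = length c" "swapc c i ! i = c ! Suc i" "swapc c i ! Suc i = c ! i"
    "take i (swapc c i) = take i c" "drop (Suc (Suc i)) (swapc c i) = drop (Suc (Suc i)) c"
    "swapc (swapc c i) i = c"
  using assms unfolding swapc_def
  by (auto simp: nth_append min_def) (metis decomp2[OF assms] append.assoc append_Cons append_Nil)

lemma finite_cuts: "finite (cuts [0..<N])"
proof (cases "3 \<le> N")
  case True
  let ?P = "sorted_list_of_set ` Pow {..<N}"
  have fP: "finite ?P" by simp
  have "cuts [0..<N] \<subseteq> {xs. set xs \<subseteq> ?P \<and> length xs \<le> card ?P}"
  proof
    fix c assume "c \<in> cuts [0..<N]"
    then have G: "Good N c" using cuts_Good[OF True] by blast
    have sub: "set c \<subseteq> ?P"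
    proof
      fix X assume "X \<in> set c"
      then have w: "wfp N X" using G unfolding Good_def by auto
      then have "X = sorted_list_of_set (set X)" unfolding wfp_def
        by (metis sorted_list_of_set.idem_if_sorted_distinct strict_sorted_iff subset_UNIV)
      moreover have "set X \<in> Pow {..<N}" using w unfolding wfp_def by auto
      ultimately show "X \<in> ?P" by blast
    qed
    have "distinct c" using G unfolding Good_def by auto
    then have "length c = card (set c)" by (simp add: distinct_card)
    also have "\<dots> \<le> card ?P" using sub fP by (rule card_mono[rotated])
    finally show "c \<in> {xs. set xs \<subseteq> ?P \<and> length xs \<le> card ?P}" using sub by auto
  qed
  then show ?thesis using finite_lists_length_le[OF fP] finite_subset by blast
next
  case False
  have "cuts [0..<N] \<subseteq> {[[0..<N]]}"
  proof
    fix c assume "c \<in> cuts [0..<N]"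
    then show "c \<in> {[[0..<N]]}"
    proof (induction rule: cuts.induct)
      case (step cs l q1 q2)
      then have "cut2 (cs ! l) = {}" using False unfolding cut2_def by auto
      then show ?case using step by simp
    qed simp
  qed
  then show ?thesis by (rule finite_subset) simp
qed

lemma finite_cut2: "finite (cut2 P)"
proof -
  have "cut2 P \<subseteq> (\<lambda>(i, j). (take (i+1) P @ drop (j+1) P, take (j+2-i) (drop i P))) ` ({..<length P} \<times> {..<length P})"
    unfolding cut2_def by (auto simp: image_iff)
  then show ?thesis by (rule finite_subset) simp
qed

lemma cut2_unique:
  assumes "wfp N P" "wfp N P'" "(q1, q2) \<in> cut2 P" "(q1, q2) \<in> cut2 P'"
  shows "P = P'"
proof -
  obtain u v where c1: "chord P u v q1 q2" using assms(1,3) cut2_char[of P] unfolding wfp_def by blast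
  obtain u' v' where c2: "chord P' u' v' q1 q2" using assms(2,4) cut2_char[of P'] unfolding wfp_def by blast
  have "set q1 \<union> set q2 = set P" using chord_props(15)[OF assms(1) c1] .
  moreover have "set q1 \<union> set q2 = set P'" using chord_props(15)[OF assms(2) c2] .
  ultimately show ?thesis using strict_sorted_equal[of P P'] assms(1,2) unfolding wfp_def by auto
qed

lemma comb:
  fixes h :: "nat list list \<Rightarrow> nat \<Rightarrow> rat"
  assumes N: "3 \<le> N"
    and anti: "\<And>c i. Suc i < length c \<Longrightarrow> h (swapc c i) i = - h c i"
  shows "(\<Sum>c\<in>cuts [0..<N]. \<Sum>i<length c. \<Sum>q\<in>cut2 (c ! i). h (stepc c i (fst q) (snd q)) i)
       = (\<Sum>c\<in>cuts [0..<N]. \<Sum>i<length c - 1. h c i)"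
proof -
  let ?C = "cuts [0..<N]"
  define E where "E = Sigma ?C (\<lambda>c. Sigma {..<length c} (\<lambda>i. cut2 (c ! i)))"
  define I where "I = Sigma ?C (\<lambda>c. {..<length c - 1})"
  define In where "In = {x\<in>I. nest (fst x ! Suc (snd x)) (fst x ! snd x)}"
  define phi where "phi = (\<lambda>(c, i, q). (stepc c i (fst q) (snd q), i))"
  define h' where "h' = (\<lambda>(c, i). h c i)"
  have fC: "finite ?C" by (rule finite_cuts)
  have fE: "finite E" unfolding E_def using fC by (auto intro!: finite_SigmaI finite_cut2)
  have fI: "finite I" unfolding I_def using fC by auto
  have GC: "Good N c" if "c \<in> ?C" for c using cuts_Good[OF N] that by blast
  have lhs: "(\<Sum>c\<in>?C. \<Sum>i<length c. \<Sum>q\<in>cut2 (c ! i). h (stepc c i (fst q) (snd q)) i)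
      = (\<Sum>x\<in>E. h' (phi x))"
    unfolding E_def h'_def phi_def using fC
    by (simp add: sum.Sigma finite_cut2 split_def)
  have rhs: "(\<Sum>c\<in>?C. \<Sum>i<length c - 1. h c i) = (\<Sum>x\<in>I. h' x)"
    unfolding I_def h'_def using fC by (simp add: sum.Sigma split_def)
  have inj: "inj_on phi E"
  proof (rule inj_onI)
    fix x y assume x: "x \<in> E" and y: "y \<in> E" and e: "phi x = phi y"
    obtain c i q1 q2 where xx: "x = (c, i, (q1, q2))" by (metis prod.exhaust)
    obtain c' i' q1' q2' where yy: "y = (c', i', (q1', q2'))" by (metis prod.exhaust)
    have xc: "c \<in> ?C" "i < length c" "(q1, q2) \<in> cut2 (c ! i)" using x xx unfolding E_def by auto
    have yc: "c' \<in> ?C" "i' < length c'" "(q1', q2') \<in> cut2 (c' ! i')" using y yy unfolding E_def by auto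
    have ii: "i' = i" and se: "stepc c i q1 q2 = stepc c' i q1' q2'" using e xx yy unfolding phi_def by auto
    note f1 = stepc_facts[OF xc(2), of q1 q2] and f2 = stepc_facts[OF yc(2)[unfolded ii], of q1' q2']
    have qq: "q1' = q1" "q2' = q2" using f1 f2 se by metis+
    have tk: "take i c = take i c'" using f1(4) f2(4) se by metis
    have dr: "drop (Suc i) c = drop (Suc i) c'" using f1(5) f2(5) se by metis
    have "wfp N (c ! i)" "wfp N (c' ! i)" using GC[OF xc(1)] GC[OF yc(1)] xc(2) yc(2) ii
      unfolding Good_def by auto
    then have ci: "c ! i = c' ! i" using cut2_unique xc(3) yc(3) qq ii by metis
    have "c = take i c @ c ! i # drop (Suc i) c" using xc(2) by (simp add: id_take_nth_drop)
    also have "\<dots> = take i c' @ c' ! i # drop (Suc i) c'" using tk dr ci by simp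
    also have "\<dots> = c'" using yc(2) ii by (simp add: id_take_nth_drop[symmetric])
    finally show "x = y" using xx yy ii qq by simp
  qed
  have img: "phi ` E = In"
  proof
    show "phi ` E \<subseteq> In"
    proof
      fix y assume "y \<in> phi ` E"
      then obtain c i q1 q2 where x: "(c, i, (q1, q2)) \<in> E" and y: "y = (stepc c i q1 q2, i)"
        unfolding phi_def by auto
      have xc: "c \<in> ?C" "i < length c" "(q1, q2) \<in> cut2 (c ! i)" using x unfolding E_def by auto
      note f1 = stepc_facts[OF xc(2), of q1 q2]
      have sC: "stepc c i q1 q2 \<in> ?C" using cuts.step[OF xc(1) xc(2) xc(3)] unfolding stepc_def .
      have w: "wfp N (c ! i)" using GC[OF xc(1)] xc(2) unfolding Good_def by auto
      then obtain u v where ch: "chord (c ! i) u v q1 q2" using xc(3) cut2_char[of "c ! i"]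
        unfolding wfp_def by blast
      note cp = chord_props[OF w ch]
      have "nest q2 q1" unfolding nest_def using cp(3,4,8,9,10,11,16) by auto
      then show "y \<in> In" unfolding In_def I_def using y sC f1 xc(2) by auto
    qed
    show "In \<subseteq> phi ` E"
    proof
      fix y assume y: "y \<in> In"
      then obtain c i where yy: "y = (c, i)" by (metis prod.exhaust)
      have yc: "c \<in> ?C" "Suc i < length c" "nest (c ! Suc i) (c ! i)"
        using y yy unfolding In_def I_def by auto
      have G: "Good N (take i c @ c ! i # c ! Suc i # drop (Suc (Suc i)) c)"
        using GC[OF yc(1)] decomp2[OF yc(2)] by simp
      define M where "M = sorted_list_of_set (set (c ! i) \<union> set (c ! Suc i))"
      have cM: "(c ! i, c ! Suc i) \<in> cut2 M" and GM: "Good N (take i c @ M # drop (Suc (Suc i)) c)"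
        using Good_merge[OF G yc(3)] unfolding M_def by auto
      let ?c0 = "take i c @ M # drop (Suc (Suc i)) c"
      have c0C: "?c0 \<in> ?C" using Good_cuts[OF GM] .
      have li: "i < length ?c0" using yc(2) by simp
      have c0i: "?c0 ! i = M" using yc(2) by (simp add: nth_append min_def)
      have "stepc ?c0 i (c ! i) (c ! Suc i) = c"
        unfolding stepc_def using yc(2) decomp2[OF yc(2)]
        by (simp add: min_def)
      then have "phi (?c0, i, (c ! i, c ! Suc i)) = y" unfolding phi_def yy by simp
      moreover have "(?c0, i, (c ! i, c ! Suc i)) \<in> E" unfolding E_def using c0C li c0i cM by auto
      ultimately show "y \<in> phi ` E" by force
    qed
  qed
  have sumE: "(\<Sum>x\<in>E. h' (phi x)) = (\<Sum>x\<in>In. h' x)"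
    using sum.reindex[OF inj, of h'] img by simp
  have InI: "In \<subseteq> I" unfolding In_def by auto
  define D where "D = I - In"
  have fD: "finite D" unfolding D_def using fI by auto
  define sig where "sig = (\<lambda>(c, i). (swapc c i, i))"
  have sigD: "sig x \<in> D" and sig2: "sig (sig x) = x" and hsig: "h' (sig x) = - h' x" if x: "x \<in> D" for x
  proof -
    obtain c i where xx: "x = (c, i)" by (metis prod.exhaust)
    have xc: "c \<in> ?C" "Suc i < length c" "\<not> nest (c ! Suc i) (c ! i)"
      using x xx unfolding D_def In_def I_def by auto
    note sf = swapc_facts[OF xc(2)]
    have G: "Good N (take i c @ c ! i # c ! Suc i # drop (Suc (Suc i)) c)"
      using GC[OF xc(1)] decomp2[OF xc(2)] by simp
    have "Good N (take i c @ c ! Suc i # c ! i # drop (Suc (Suc i)) c)" using Good_swap[OF G xc(3)] .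
    then have sC: "swapc c i \<in> ?C" using Good_cuts unfolding swapc_def by simp
    have "sorted_wrt ocr c" using GC[OF xc(1)] unfolding Good_def by auto
    then have "ocr (c ! i) (c ! Suc i)" using xc(2) by (simp add: sorted_wrt_nth_less)
    then have nn: "\<not> nest (c ! i) (c ! Suc i)" unfolding ocr_def .
    show "sig x \<in> D" unfolding sig_def xx D_def In_def I_def using sC sf nn xc(2) by auto
    show "sig (sig x) = x" unfolding sig_def xx using sf by simp
    show "h' (sig x) = - h' x" unfolding sig_def xx h'_def using anti[OF xc(2)] by simp
  qed
  have "(\<Sum>x\<in>D. h' x) = (\<Sum>x\<in>D. h' (sig x))"
    by (rule sum.reindex_bij_witness[of _ sig sig]) (use sigD sig2 in auto)
  also have "\<dots> = - (\<Sum>x\<in>D. h' x)" using hsig by (simp add: sum_negf)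
  finally have D0: "(\<Sum>x\<in>D. h' x) = 0" by simp
  have "(\<Sum>x\<in>I. h' x) = (\<Sum>x\<in>In. h' x) + (\<Sum>x\<in>D. h' x)"
    unfolding D_def using sum.subset_diff[OF InI fI, of h'] by (simp add: add.commute)
  then show ?thesis using lhs rhs sumE D0 by simp
qed

definition fs :: "('a \<Rightarrow> rat) \<Rightarrow> bool" where "fs F \<longleftrightarrow> finite {b. F b \<noteq> 0}"
definition Phi :: "('a \<Rightarrow> rat) \<Rightarrow> ('a \<Rightarrow> rat) \<Rightarrow> rat" where
  "Phi s F = (\<Sum>b\<in>{b. F b \<noteq> 0}. F b * s b)"

lemma fun_sum_apply: "(\<Sum>x\<in>S. f x) y = (\<Sum>x\<in>S. f x y)"
  by (induction S rule: infinite_finite_induct) auto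

lemma Phi_eq: "fs F \<Longrightarrow> finite U \<Longrightarrow> {b. F b \<noteq> 0} \<subseteq> U \<Longrightarrow> Phi s F = (\<Sum>b\<in>U. F b * s b)"
  unfolding Phi_def fs_def by (rule sum.mono_neutral_left) auto

lemma fs_zero[simp]: "fs 0" unfolding fs_def by simp
lemma Phi_zero[simp]: "Phi s 0 = 0" unfolding Phi_def by simp

lemma fs_add[simp]: "fs F \<Longrightarrow> fs G \<Longrightarrow> fs (F + G)"
  unfolding fs_def by (rule finite_subset[of _ "{b. F b \<noteq> 0} \<union> {b. G b \<noteq> 0}"]) auto

lemma Phi_add: "fs F \<Longrightarrow> fs G \<Longrightarrow> Phi s (F + G) = Phi s F + Phi s G"
proof -
  assume f: "fs F" "fs G"
  let ?U = "{b. F b \<noteq> 0} \<union> {b. G b \<noteq> 0}"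
  have fU: "finite ?U" using f unfolding fs_def by auto
  have "Phi s (F + G) = (\<Sum>b\<in>?U. (F + G) b * s b)" using f fU by (intro Phi_eq) auto
  also have "\<dots> = (\<Sum>b\<in>?U. F b * s b) + (\<Sum>b\<in>?U. G b * s b)"
    by (simp add: distrib_right sum.distrib)
  also have "\<dots> = Phi s F + Phi s G"
  proof -
    have "Phi s F = (\<Sum>b\<in>?U. F b * s b)" by (rule Phi_eq) (use f fU in auto)
    moreover have "Phi s G = (\<Sum>b\<in>?U. G b * s b)" by (rule Phi_eq) (use f fU in auto)
    ultimately show ?thesis by simp
  qed
  finally show ?thesis .
qed

lemma fs_smult[simp]: "fs F \<Longrightarrow> fs (smult c F)"
  unfolding fs_def smult_def by (rule finite_subset[of _ "{b. F b \<noteq> 0}"]) auto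

lemma Phi_smult: "fs F \<Longrightarrow> Phi s (smult c F) = c * Phi s F"
proof -
  assume f: "fs F"
  have "Phi s (smult c F) = (\<Sum>b\<in>{b. F b \<noteq> 0}. smult c F b * s b)"
    using f by (intro Phi_eq) (auto simp: fs_def smult_def)
  also have "\<dots> = c * Phi s F" unfolding Phi_def smult_def by (simp add: sum_distrib_left mult.assoc)
  finally show ?thesis .
qed

lemma fs_single[simp]: "fs (single b)" unfolding fs_def single_def by simp

lemma Phi_single[simp]: "Phi s (single b) = s b"
  unfolding Phi_def single_def by (simp add: if_distrib)

lemma fs_sum: "(\<And>x. x \<in> S \<Longrightarrow> fs (F x)) \<Longrightarrow> fs (\<Sum>x\<in>S. F x)"
  by (induction S rule: infinite_finite_induct) auto

lemma Phi_sum: "(\<And>x. x \<in> S \<Longrightarrow> fs (F x)) \<Longrightarrow> Phi s (\<Sum>x\<in>S. F x) = (\<Sum>x\<in>S. Phi s (F x))"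
proof (induction S rule: infinite_finite_induct)
  case (insert x S)
  have e: "(\<Sum>y\<in>insert x S. F y) = F x + (\<Sum>y\<in>S. F y)" using insert(1,2) by (rule sum.insert)
  have "fs (\<Sum>y\<in>S. F y)" using insert(4) by (intro fs_sum) auto
  then have A: "Phi s (\<Sum>y\<in>insert x S. F y) = Phi s (F x) + Phi s (\<Sum>y\<in>S. F y)"
    unfolding e using insert(4) by (intro Phi_add) auto
  have B: "Phi s (\<Sum>y\<in>S. F y) = (\<Sum>y\<in>S. Phi s (F y))" using insert by auto
  have C: "(\<Sum>y\<in>insert x S. Phi s (F y)) = Phi s (F x) + (\<Sum>y\<in>S. Phi s (F y))"
    using insert(1,2) by (rule sum.insert)
  show ?case using A B C by linarith
qed auto

lemma fs_dbasis: "fs (dbasis ws)"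
  unfolding dbasis_def dext_def dint_def split_def
  by (intro fs_add fs_sum fs_smult fs_single)

lemma Phi_dext: "Phi s (dext ws) = (\<Sum>i<length ws. \<Sum>j<length (ws ! i).
      \<Sum>x\<in>cut2 [0..<length (ws ! i ! j)].
        (jsign ws i * (-1) * (-1) ^ j) *
          s (ws[i := take j (ws ! i)
                    @ [map (\<lambda>k. ws ! i ! j ! k) (fst x), map (\<lambda>k. ws ! i ! j ! k) (snd x)]
                    @ drop (Suc j) (ws ! i)]))"
  unfolding dext_def split_def
  by (simp add: Phi_sum fs_sum Phi_smult)

lemma Phi_dint: "Phi s (dint ws) = (\<Sum>i<length ws - 1.
      jsign ws (Suc i) * s (take i ws @ [ws ! i @ ws ! Suc i] @ drop (Suc (Suc i)) ws))"
  unfolding dint_def by (simp add: Phi_sum Phi_smult)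

lemma Phi_dbasis: "Phi s (dbasis ws) = Phi s (dext ws) + Phi s (dint ws)"
  unfolding dbasis_def
  by (rule Phi_add) (auto simp: dext_def dint_def split_def intro!: fs_sum)

lemma pairs2: "{(k, l). k < l \<and> l < Suc (Suc 0) \<and> P k l} = (if P 0 (Suc 0) then {(0, Suc 0)} else {})"
  by (auto simp: less_Suc_eq)

lemma ex2: "(\<exists>a b. b < a \<and> a < Suc (Suc 0) \<and> Q a b) \<longleftrightarrow> Q (Suc 0) 0"
  by (auto simp: less_Suc_eq)

lemma len2: "distinct v \<Longrightarrow> set v = {x, y} \<Longrightarrow> x \<noteq> y \<Longrightarrow> v = [x, y] \<or> v = [y, x]"
proof -
  assume d: "distinct v" and s: "set v = {x, y}" and xy: "x \<noteq> y"
  have "length v = 2" using d s xy distinct_card[OF d] by simp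
  then have "\<exists>p q. v = [p, q]" by (auto simp: length_Suc_conv numeral_2_eq_2)
  then obtain p q where v: "v = [p, q]" by blast
  then show ?thesis using s d xy by (auto simp: doubleton_eq_iff)
qed

lemma p1: "x \<noteq> y \<Longrightarrow> permsign [x, y] [x, y] = 1"
  unfolding permsign_def by (simp add: pairs2 ex2)
lemma p2: "x \<noteq> y \<Longrightarrow> permsign [x, y] [y, x] = -1"
  unfolding permsign_def by (simp add: pairs2 ex2 insert_commute)

lemma t1: "\<not> (x \<noteq> y \<and> distinct v \<and> set v = {x, y}) \<Longrightarrow> \<not> (distinct [x, y] \<and> distinct v \<and> set [x, y] = set v)"
  by auto
lemma t3: "\<not> (x \<noteq> y \<and> distinct v \<and> set v = {x, y}) \<Longrightarrow> \<not> (distinct [y, x] \<and> distinct v \<and> set [y, x] = set v)"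
proof
  assume a: "\<not> (x \<noteq> y \<and> distinct v \<and> set v = {x, y})" and b: "distinct [y, x] \<and> distinct v \<and> set [y, x] = set v"
  have "{y, x} = {x, y}" by blast
  then show False using a b by simp
qed

lemma permsign_swap: "permsign [x, y] v = - permsign [y, x] v"
proof (cases "x \<noteq> y \<and> distinct v \<and> set v = {x, y}")
  case False
  have "permsign [x, y] v = 0" unfolding permsign_def by (rule if_not_P[OF t1[OF False]])
  moreover have "permsign [y, x] v = 0" unfolding permsign_def by (rule if_not_P[OF t3[OF False]])
  ultimately show ?thesis by simp
next
  case True
  then have xy: "x \<noteq> y" by simp
  have "v = [x, y] \<or> v = [y, x]" using len2[of v x y] True by simp
  then consider "v = [x, y]" | "v = [y, x]" by blast
  then show ?thesis
  proof cases
    case 1 then show ?thesis using p1[OF xy] p2[OF xy[symmetric]] by simp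
  next
    case 2 then show ?thesis using p2[OF xy] p1[OF xy[symmetric]] by simp
  qed
qed

lemma prod_flip:
  fixes f g :: "nat \<Rightarrow> rat"
  assumes "k < n" "g k = - f k" "\<And>i. i < n \<Longrightarrow> i \<noteq> k \<Longrightarrow> g i = f i"
  shows "(\<Prod>i<n. g i) = - (\<Prod>i<n. f i)"
proof -
  have "(\<Prod>i<n. g i) = g k * (\<Prod>i\<in>{..<n} - {k}. g i)" using assms(1) by (simp add: prod.remove)
  moreover have "(\<Prod>i<n. f i) = f k * (\<Prod>i\<in>{..<n} - {k}. f i)" using assms(1) by (simp add: prod.remove)
  moreover have "(\<Prod>i\<in>{..<n} - {k}. g i) = (\<Prod>i\<in>{..<n} - {k}. f i)" using assms(3) by (intro prod.cong) auto
  ultimately show ?thesis using assms(2) by simp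
qed

lemma slotsign_swap: "slotsign (xs @ [[x, y]] @ ys) w = - slotsign (xs @ [[y, x]] @ ys) w"
proof (cases "length (xs @ [[x, y]] @ ys) = length w")
  case False then show ?thesis unfolding slotsign_def by simp
next
  case True
  have "(\<Prod>i<length w. permsign ((xs @ [[x, y]] @ ys) ! i) (w ! i))
      = - (\<Prod>i<length w. permsign ((xs @ [[y, x]] @ ys) ! i) (w ! i))"
    by (rule prod_flip[of "length xs"]) (use True permsign_swap in \<open>auto simp: nth_append\<close>)
  then show ?thesis unfolding slotsign_def using True by simp
qed

definition cutf :: "'a list \<Rightarrow> nat \<times> nat \<Rightarrow> 'a list \<times> 'a list" where
  "cutf P ij = (take (fst ij + 1) P @ drop (snd ij + 1) P, take (snd ij + 2 - fst ij) (drop (fst ij) P))"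

lemma cut2_img: "cut2 P = cutf P ` {(i, j). i < j \<and> j \<le> length P - 2 \<and> (i, j) \<noteq> (0, length P - 2)}"
proof (rule set_eqI)
  fix x
  show "x \<in> cut2 P \<longleftrightarrow> x \<in> cutf P ` {(i, j). i < j \<and> j \<le> length P - 2 \<and> (i, j) \<noteq> (0, length P - 2)}"
  proof
    assume "x \<in> cut2 P"
    then obtain i j where "x = cutf P (i, j)" "i < j \<and> j \<le> length P - 2 \<and> (i, j) \<noteq> (0, length P - 2)"
      unfolding cut2_def cutf_def by auto
    then show "x \<in> cutf P ` {(i, j). i < j \<and> j \<le> length P - 2 \<and> (i, j) \<noteq> (0, length P - 2)}"
      by (intro rev_image_eqI[of "(i, j)"]) auto
  next
    assume "x \<in> cutf P ` {(i, j). i < j \<and> j \<le> length P - 2 \<and> (i, j) \<noteq> (0, length P - 2)}"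
    then obtain i j where "x = cutf P (i, j)" "i < j \<and> j \<le> length P - 2 \<and> (i, j) \<noteq> (0, length P - 2)"
      by auto
    then show "x \<in> cut2 P" unfolding cut2_def cutf_def by auto
  qed
qed

lemma cutf_map: "(map f (fst (cutf P ij)), map f (snd (cutf P ij))) = cutf (map f P) ij"
  unfolding cutf_def by (simp add: take_map drop_map)

lemma cut2_reindex:
  "cut2 q = (\<lambda>x. (map ((!) q) (fst x), map ((!) q) (snd x))) ` cut2 [0..<length q]"
proof -
  have "(\<lambda>x. (map ((!) q) (fst x), map ((!) q) (snd x))) (cutf [0..<length q] ij) = cutf q ij" for ij
    using cutf_map[of "(!) q" "[0..<length q]" ij] by (simp only: map_nth)
  then show ?thesis unfolding cut2_img image_image by simp
qed

definition symq :: "'s list \<Rightarrow> nat list \<Rightarrow> 's list" where "symq A q = map ((!) A) q"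
definition Wc :: "'s list \<Rightarrow> nat list list \<Rightarrow> 's barb" where "Wc A c = map (\<lambda>q. [symq A q]) c"
definition X2 :: "nat list list \<Rightarrow> nat \<Rightarrow> nat list \<Rightarrow> nat list \<Rightarrow> nat list list list" where
  "X2 c i a b = map (\<lambda>q. [q]) (take i c) @ [[a, b]] @ map (\<lambda>q. [q]) (drop (Suc (Suc i)) c)"
definition hh :: "'s list \<Rightarrow> 's barb \<Rightarrow> nat list list \<Rightarrow> nat \<Rightarrow> rat" where
  "hh A w c i = slotsign (map (map (symq A)) (X2 c i (c ! i) (c ! Suc i))) w"

lemma jsign_Wc: "i \<le> length c \<Longrightarrow> jsign (Wc A c) i = 1"
  unfolding jsign_def Wc_def by (intro prod.neutral) auto

lemma map_X2: "map (map (symq A)) (X2 c i a b)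
   = map (\<lambda>q. [symq A q]) (take i c) @ [[symq A a, symq A b]] @ map (\<lambda>q. [symq A q]) (drop (Suc (Suc i)) c)"
  unfolding X2_def by simp

lemma slotsign_swap': "slotsign (xs @ [x, y] # ys) w = - slotsign (xs @ [y, x] # ys) w"
  using slotsign_swap[of xs x y ys w] by simp

lemma hh_anti: "Suc i < length c \<Longrightarrow> hh A w (swapc c i) i = - hh A w c i"
  unfolding hh_def map_X2 using swapc_facts[of i c]
  by (simp add: slotsign_swap'[of _ "symq A (c ! Suc i)"])

lemma Phi_dint_Wc: "Phi (\<lambda>b. slotsign b w) (dint (Wc A c)) = (\<Sum>i<length c - 1. hh A w c i)"
  unfolding Phi_dint
proof (rule sum.cong)
  fix i assume "i \<in> {..<length c - 1}"
  then have i: "Suc i < length c" by auto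
  have "take i (Wc A c) @ [Wc A c ! i @ Wc A c ! Suc i] @ drop (Suc (Suc i)) (Wc A c)
      = map (map (symq A)) (X2 c i (c ! i) (c ! Suc i))"
    unfolding map_X2 Wc_def using i by (simp add: take_map drop_map)
  then show "jsign (Wc A c) (Suc i) * slotsign (take i (Wc A c) @ [Wc A c ! i @ Wc A c ! Suc i] @ drop (Suc (Suc i)) (Wc A c)) w
      = hh A w c i"
    unfolding hh_def using jsign_Wc[of "Suc i" c A] i by simp
qed (simp add: Wc_def)

lemma cut2_sub: "x \<in> cut2 P \<Longrightarrow> set (fst x) \<subseteq> set P \<and> set (snd x) \<subseteq> set P"
proof -
  have a: "set (take n (drop i P)) \<subseteq> set P" for n i by (meson order.trans set_drop_subset set_take_subset)
  have b: "set (take n P @ drop m P) \<subseteq> set P" for n m using set_drop_subset set_take_subset by force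
  assume "x \<in> cut2 P"
  then obtain i j where "x = (take (i+1) P @ drop (j+1) P, take (j+2-i) (drop i P))"
    unfolding cut2_def by blast
  then show ?thesis using a[of "j+2-i" i] b[of "i+1" "j+1"] by simp
qed

lemma map_nth_symq: "\<forall>k\<in>set xs. k < length q \<Longrightarrow> map ((!) (symq A q)) xs = symq A (map ((!) q) xs)"
  by (induction xs) (auto simp: symq_def)

lemma Phi_dext_Wc:
  assumes c: "c \<in> cuts [0..<N]" and N: "3 \<le> N"
  shows "Phi (\<lambda>b. slotsign b w) (dext (Wc A c))
     = - (\<Sum>i<length c. \<Sum>q\<in>cut2 (c ! i). hh A w (stepc c i (fst q) (snd q)) i)"
proof -
  have G: "Good N c" using cuts_Good[OF N c] .
  let ?s = "\<lambda>b. slotsign b w"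
  have "Phi ?s (dext (Wc A c)) = (\<Sum>i<length c. - (\<Sum>q\<in>cut2 (c ! i). hh A w (stepc c i (fst q) (snd q)) i))"
    unfolding Phi_dext
  proof (rule sum.cong)
    fix i assume "i \<in> {..<length c}"
    then have i: "i < length c" by auto
    have ws_i: "Wc A c ! i = [symq A (c ! i)]" unfolding Wc_def using i by simp
    have dci: "distinct (c ! i)" using G i unfolding Good_def wfp_def by (auto simp: strict_sorted_iff)
    define pm where "pm = (\<lambda>x. (map ((!) (c ! i)) (fst x), map ((!) (c ! i)) (snd x)))"
    have inj: "inj_on pm (cut2 [0..<length (c ! i)])"
    proof (rule inj_onI)
      fix x y assume x: "x \<in> cut2 [0..<length (c ! i)]" and y: "y \<in> cut2 [0..<length (c ! i)]" and e: "pm x = pm y"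
      have ij: "inj_on ((!) (c ! i)) {..<length (c ! i)}" using dci by (intro inj_on_nth) auto
      have sx: "set (fst x) \<union> set (fst y) \<subseteq> {..<length (c ! i)}" "set (snd x) \<union> set (snd y) \<subseteq> {..<length (c ! i)}"
        using cut2_sub[OF x] cut2_sub[OF y] by auto
      have "fst x = fst y" using e inj_on_map_eq_map[OF inj_on_subset[OF ij sx(1)]] unfolding pm_def by simp
      moreover have "snd x = snd y" using e inj_on_map_eq_map[OF inj_on_subset[OF ij sx(2)]] unfolding pm_def by simp
      ultimately show "x = y" by (simp add: prod_eq_iff)
    qed
    have img: "cut2 (c ! i) = pm ` cut2 [0..<length (c ! i)]" unfolding pm_def by (rule cut2_reindex)
    have tm: "(jsign (Wc A c) i * (-1) * (-1) ^ j) *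
          ?s ((Wc A c)[i := take j (Wc A c ! i)
                    @ [map (\<lambda>k. Wc A c ! i ! j ! k) (fst x), map (\<lambda>k. Wc A c ! i ! j ! k) (snd x)]
                    @ drop (Suc j) (Wc A c ! i)])
        = - hh A w (stepc c i (fst (pm x)) (snd (pm x))) i"
      if j: "j \<in> {..<length (Wc A c ! i)}" and x: "x \<in> cut2 [0..<length (Wc A c ! i ! j)]" for j x
    proof -
      have j0: "j = 0" using j ws_i by simp
      have x': "x \<in> cut2 [0..<length (c ! i)]" using x j0 ws_i by (simp add: symq_def)
      have sub: "\<forall>k\<in>set (fst x). k < length (c ! i)" "\<forall>k\<in>set (snd x). k < length (c ! i)"
        using cut2_sub[OF x'] by auto
      have m1: "map ((!) (symq A (c ! i))) (fst x) = symq A (fst (pm x))"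
        using map_nth_symq[OF sub(1), of A] unfolding pm_def by simp
      have m2: "map ((!) (symq A (c ! i))) (snd x) = symq A (snd (pm x))"
        using map_nth_symq[OF sub(2), of A] unfolding pm_def by simp
      note sf = stepc_facts[OF i, of "fst (pm x)" "snd (pm x)"]
      have L: "(Wc A c)[i := take j (Wc A c ! i)
                    @ [map (\<lambda>k. Wc A c ! i ! j ! k) (fst x), map (\<lambda>k. Wc A c ! i ! j ! k) (snd x)]
                    @ drop (Suc j) (Wc A c ! i)]
          = map (map (symq A)) (X2 (stepc c i (fst (pm x)) (snd (pm x))) i
               (stepc c i (fst (pm x)) (snd (pm x)) ! i) (stepc c i (fst (pm x)) (snd (pm x)) ! Suc i))"
        unfolding map_X2 sf(2,3,4,5) j0 ws_i using i
        by (simp add: m1 m2 Wc_def upd_conv_take_nth_drop take_map drop_map)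
      show ?thesis unfolding L hh_def using jsign_Wc[of i c A] i j0 by simp
    qed
    have "(\<Sum>j<length (Wc A c ! i). \<Sum>x\<in>cut2 [0..<length (Wc A c ! i ! j)].
          (jsign (Wc A c) i * (-1) * (-1) ^ j) *
          ?s ((Wc A c)[i := take j (Wc A c ! i)
                    @ [map (\<lambda>k. Wc A c ! i ! j ! k) (fst x), map (\<lambda>k. Wc A c ! i ! j ! k) (snd x)]
                    @ drop (Suc j) (Wc A c ! i)]))
        = (\<Sum>j<length (Wc A c ! i). \<Sum>x\<in>cut2 [0..<length (Wc A c ! i ! j)].
            - hh A w (stepc c i (fst (pm x)) (snd (pm x))) i)"
      by (intro sum.cong refl) (rule tm)
    also have "\<dots> = (\<Sum>x\<in>cut2 [0..<length (c ! i)]. - hh A w (stepc c i (fst (pm x)) (snd (pm x))) i)"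
      using ws_i by (simp add: symq_def)
    also have "\<dots> = - (\<Sum>q\<in>cut2 (c ! i). hh A w (stepc c i (fst q) (snd q)) i)"
      unfolding img using sum.reindex[OF inj, of "\<lambda>q. hh A w (stepc c i (fst q) (snd q)) i"]
      by (simp add: sum_negf)
    finally show "(\<Sum>j<length (Wc A c ! i). \<Sum>x\<in>cut2 [0..<length (Wc A c ! i ! j)].
          (jsign (Wc A c) i * (-1) * (-1) ^ j) *
          ?s ((Wc A c)[i := take j (Wc A c ! i)
                    @ [map (\<lambda>k. Wc A c ! i ! j ! k) (fst x), map (\<lambda>k. Wc A c ! i ! j ! k) (snd x)]
                    @ drop (Suc j) (Wc A c ! i)]))
        = - (\<Sum>q\<in>cut2 (c ! i). hh A w (stepc c i (fst q) (snd q)) i)" .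
  qed (simp add: Wc_def)
  then show ?thesis by (simp add: sum_negf)
qed

theorem mainTheorem2:
  fixes A :: "'s list"
  assumes "length A \<ge> 3"
  shows "bar_zero (dB (Tcut A))"
proof -
  define N where "N = length A"
  have N: "3 \<le> N" using assms N_def by simp
  let ?C = "cuts [0..<N]"
  have T: "Tcut A = (\<Sum>c\<in>?C. single (Wc A c))"
    unfolding Tcut_def Wc_def symq_def N_def by simp
  have fT: "fs (Tcut A)" unfolding T by (intro fs_sum fs_single)
  show ?thesis unfolding bar_zero_def
  proof
    fix w :: "'s barb"
    let ?s = "\<lambda>b. slotsign b w"
    have "Phi ?s (dB (Tcut A)) = (\<Sum>b\<in>{b. Tcut A b \<noteq> 0}. Phi ?s (smult (Tcut A b) (dbasis b)))"
      unfolding dB_def by (rule Phi_sum) (simp add: fs_dbasis)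
    also have "\<dots> = (\<Sum>b\<in>{b. Tcut A b \<noteq> 0}. Tcut A b * Phi ?s (dbasis b))"
      by (simp add: Phi_smult fs_dbasis)
    also have "\<dots> = Phi (\<lambda>b. Phi ?s (dbasis b)) (Tcut A)" unfolding Phi_def ..
    also have "\<dots> = (\<Sum>c\<in>?C. Phi ?s (dbasis (Wc A c)))"
      unfolding T by (simp add: Phi_sum)
    also have "\<dots> = (\<Sum>c\<in>?C. - (\<Sum>i<length c. \<Sum>q\<in>cut2 (c ! i). hh A w (stepc c i (fst q) (snd q)) i)
                          + (\<Sum>i<length c - 1. hh A w c i))"
      by (intro sum.cong refl) (simp add: Phi_dbasis Phi_dint_Wc Phi_dext_Wc[OF _ N])
    also have "\<dots> = - (\<Sum>c\<in>?C. \<Sum>i<length c. \<Sum>q\<in>cut2 (c ! i). hh A w (stepc c i (fst q) (snd q)) i)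
                     + (\<Sum>c\<in>?C. \<Sum>i<length c - 1. hh A w c i)"
      by (simp add: sum.distrib sum_negf sum_subtractf)
    also have "\<dots> = 0" using comb[OF N, of "hh A w", OF hh_anti] by simp
    finally show "(\<Sum>b\<in>{b. dB (Tcut A) b \<noteq> 0}. dB (Tcut A) b * slotsign b w) = 0"
      unfolding Phi_def .
  qed
qed

end
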